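(* Let $\theta$ be a character of $Z$ trivial on $Z\cap\mathcal{K}_1$, and let $r\in\mathbb{Z}_{\ge0}$. Then $$\dim\big(\tau_{\mathcal{N}_1}(\theta)^{\mathcal{K}_{2r+1}}\big)=q(q^{2r}-1),\qquad \dim\big(\tau_{\mathcal{N}_\varpi}(\theta)^{\mathcal{K}_{2r+1}}\big)=q^{2r}-1,$$ where $V^{\mathcal{K}_{2r+1}}$ denotes the subspace of $\mathcal{K}_{2r+1}$-fixed vectors.
   Context: Let $F$ be a non-archimedean local field with odd residual characteristic, ring of integers $\mathcal{O}_F$, maximal ideal $\mathfrak{p}_F$, uniformizer $\varpi$, residue field of cardinality $q$. Fix a non-square $\epsilon\in\mathcal{O}_F^\times$, $E=F[\sqrt\epsilon]$ with ring of integers $\mathcal{O}_E$, maximal ideal $\mathfrak{p}_E$; $\overline{x}$ is Galois conjugation. $G=\{g\in\mathrm{GL}_2(E):\overline{g}^{\top}\mathrm{w}g=\mathrm{w}\}$, $\mathrm{w}=\begin{pmatrix}0&1\\1&0\end{pmatrix}$; $\mathcal{K}=G\cap M_2(\mathcal{O}_E)$, $\mathcal{K}_n=\{g\in\mathcal{K}:g\equiv I\bmod\mathfrak{p}_E^n\}$; $Z$ the scalar matrices in $G$; $\mathcal{U}=\{\begin{pmatrix}1&\sqrt\epsilon b\\0&1\end{pmatrix}:b\in\mathcal{O}_F\}$. Fix an additive character $\psi'$ of $F$ trivial on $\mathfrak{p}_F$, nontrivial on $\mathcal{O}_F$; $\psi(x)=\psi'((x+\overline x)/2)$. For $d\ge1$,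 $\mathcal{J}_d$ is the set of $g\in G$ with $g_{11}-1,g_{22}-1,g_{12}\in\mathfrak{p}_E^{\lceil d/2\rceil}$ and $g_{21}\in\mathfrak{p}_E^{\lceil(d+1)/2\rceil}$; $X_{\varpi^{-d}}=\begin{pmatrix}0&\varpi^{-d}\sqrt\epsilon\\0&0\end{pmatrix}$; $\Psi(g)=\psi(\mathrm{Tr}(X_{\varpi^{-d}}(g-I)))$ is a character of $\mathcal{J}_d$; $\Psi_\theta$ is the character of $Z\mathcal{U}\mathcal{J}_d$ equal to $\theta$ on $Z$, trivial on $\mathcal{U}$, and $\Psi$ on $\mathcal{J}_d$; $\mathcal{S}_d(X_{\varpi^{-d}},\theta)=\mathrm{Ind}_{Z\mathcal{U}\mathcal{J}_d}^{\mathcal{K}}\Psi_\theta$, an irreducible representation of $\mathcal{K}$ of degree $(q^2-1)q^{d-1}$ on which $\mathcal{K}_{d+1}$ but not $\mathcal{K}_d$ acts trivially. $\tau_{\mathcal{N}_1}(\theta)=\bigoplus_{d\in2\mathbb{Z}_{>0}}\mathcal{S}_d(X_{\varpi^{-d}},\theta)$ and $\tau_{\mathcal{N}_\varpi}(\theta)=\bigoplus_{d\in2\mathbb{Z}_{\ge0}+1}\mathcal{S}_d(X_{\varpi^{-d}},\theta)$. *)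

theory Defs
  imports "HOL-Analysis.Analysis" "HOL-Library.Function_Algebras"
begin

text \<open>A discrete valuation on a field is encoded by v :: 'f => int, meaningful on
nonzero elements only (v 0 plays the role of +infinity and is never used).\<close>

definition pF :: "('f::field \<Rightarrow> int) \<Rightarrow> int \<Rightarrow> 'f set" where
  "pF v n = {x. x = 0 \<or> v x \<ge> n}"

definition OF :: "('f::field \<Rightarrow> int) \<Rightarrow> 'f set" where
  "OF v = pF v 0"

definition residue_card :: "('f::field \<Rightarrow> int) \<Rightarrow> nat" where
  "residue_card v = card ((\<lambda>x. {y \<in> OF v. y - x \<in> pF v 1}) ` OF v)"

definition nonarch_local_field :: "('f::field \<Rightarrow> int) \<Rightarrow> bool" where
  "nonarch_local_field v \<longleftrightarrow>
     (\<forall>x y. x \<noteq> 0 \<longrightarrow> y \<noteq> 0 \<longrightarrow> v (x * y) = v x + v y) \<and>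
     (\<forall>x y. x \<noteq> 0 \<longrightarrow> y \<noteq> 0 \<longrightarrow> x + y \<noteq> 0 \<longrightarrow> v (x + y) \<ge> min (v x) (v y)) \<and>
     (\<forall>n. \<exists>x. x \<noteq> 0 \<and> v x = n) \<and>
     \<comment> \<open>completeness w.r.t. the valuation metric\<close>
     (\<forall>s :: nat \<Rightarrow> 'f. (\<forall>n. \<exists>N. \<forall>m\<ge>N. \<forall>k\<ge>N. s m - s k \<in> pF v n) \<longrightarrow>
         (\<exists>L. \<forall>n. \<exists>N. \<forall>m\<ge>N. s m - L \<in> pF v n)) \<and>
     \<comment> \<open>finite residue field\<close>
     finite ((\<lambda>x. {y \<in> OF v. y - x \<in> pF v 1}) ` OF v)"

text \<open>Odd residual characteristic: 2 is a unit of the ring of integers.\<close>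
definition odd_residual_char :: "('f::field \<Rightarrow> int) \<Rightarrow> bool" where
  "odd_residual_char v \<longleftrightarrow> (2::'f) \<noteq> 0 \<and> v 2 = 0"

section \<open>The quadratic extension E = F[sqrt eps], elements (a,b) = a + b sqrt eps\<close>

definition eadd :: "'f::field \<times> 'f \<Rightarrow> 'f \<times> 'f \<Rightarrow> 'f \<times> 'f" where
  "eadd z w = (fst z + fst w, snd z + snd w)"

definition esub :: "'f::field \<times> 'f \<Rightarrow> 'f \<times> 'f \<Rightarrow> 'f \<times> 'f" where
  "esub z w = (fst z - fst w, snd z - snd w)"

definition emul :: "'f::field \<Rightarrow> 'f \<times> 'f \<Rightarrow> 'f \<times> 'f \<Rightarrow> 'f \<times> 'f" where
  "emul eps z w = (fst z * fst w + eps * snd z * snd w, fst z * snd w + snd z * fst w)"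

definition econj :: "'f::field \<times> 'f \<Rightarrow> 'f \<times> 'f" where
  "econj z = (fst z, - snd z)"

definition e0 :: "'f::field \<times> 'f" where "e0 = (0, 0)"
definition e1 :: "'f::field \<times> 'f" where "e1 = (1, 0)"
definition esqrt :: "'f::field \<times> 'f" where "esqrt = (0, 1)"
definition emb :: "'f::field \<Rightarrow> 'f \<times> 'f" where "emb x = (x, 0)"

text \<open>Since eps is a non-square unit and the
residual characteristic is odd, E/F is unramified, O_E = O_F + O_F sqrt eps and
varpi is a uniformizer of E, so p_E^n = p_F^n + p_F^n sqrt eps.\<close>
definition pE :: "('f::field \<Rightarrow> int) \<Rightarrow> int \<Rightarrow> ('f \<times> 'f) set" where
  "pE v n = {z. fst z \<in> pF v n \<and> snd z \<in> pF v n}"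

definition OE :: "('f::field \<Rightarrow> int) \<Rightarrow> ('f \<times> 'f) set" where
  "OE v = pE v 0"

datatype 'a m2 = M2 (m11: 'a) (m12: 'a) (m21: 'a) (m22: 'a)

definition mmul :: "'f::field \<Rightarrow> ('f \<times> 'f) m2 \<Rightarrow> ('f \<times> 'f) m2 \<Rightarrow> ('f \<times> 'f) m2" where
  "mmul eps g h = M2
     (eadd (emul eps (m11 g) (m11 h)) (emul eps (m12 g) (m21 h)))
     (eadd (emul eps (m11 g) (m12 h)) (emul eps (m12 g) (m22 h)))
     (eadd (emul eps (m21 g) (m11 h)) (emul eps (m22 g) (m21 h)))
     (eadd (emul eps (m21 g) (m12 h)) (emul eps (m22 g) (m22 h)))"

definition msub :: "('f::field \<times> 'f) m2 \<Rightarrow> ('f \<times> 'f) m2 \<Rightarrow> ('f \<times> 'f) m2" where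
  "msub g h = M2 (esub (m11 g) (m11 h)) (esub (m12 g) (m12 h))
                 (esub (m21 g) (m21 h)) (esub (m22 g) (m22 h))"

definition mI :: "('f::field \<times> 'f) m2" where "mI = M2 e1 e0 e0 e1"
definition mw :: "('f::field \<times> 'f) m2" where "mw = M2 e0 e1 e1 e0"

definition mct :: "('f::field \<times> 'f) m2 \<Rightarrow> ('f \<times> 'f) m2" where
  "mct g = M2 (econj (m11 g)) (econj (m21 g)) (econj (m12 g)) (econj (m22 g))"

definition mdet :: "'f::field \<Rightarrow> ('f \<times> 'f) m2 \<Rightarrow> 'f \<times> 'f" where
  "mdet eps g = esub (emul eps (m11 g) (m22 g)) (emul eps (m12 g) (m21 g))"

definition mtrace :: "('f::field \<times> 'f) m2 \<Rightarrow> 'f \<times> 'f" where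
  "mtrace g = eadd (m11 g) (m22 g)"

definition Ggrp :: "'f::field \<Rightarrow> ('f \<times> 'f) m2 set" where
  "Ggrp eps = {g. mdet eps g \<noteq> e0 \<and> mmul eps (mct g) (mmul eps mw g) = mw}"

definition Kgrp :: "'f::field \<Rightarrow> ('f \<Rightarrow> int) \<Rightarrow> ('f \<times> 'f) m2 set" where
  "Kgrp eps v = {g \<in> Ggrp eps. m11 g \<in> OE v \<and> m12 g \<in> OE v \<and> m21 g \<in> OE v \<and> m22 g \<in> OE v}"

definition Kn :: "'f::field \<Rightarrow> ('f \<Rightarrow> int) \<Rightarrow> nat \<Rightarrow> ('f \<times> 'f) m2 set" where
  "Kn eps v n = {g \<in> Kgrp eps v. let h = msub g mI in
      m11 h \<in> pE v (int n) \<and> m12 h \<in> pE v (int n) \<and> m21 h \<in> pE v (int n) \<and> m22 h \<in> pE v (int n)}"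

definition Zgrp :: "'f::field \<Rightarrow> ('f \<times> 'f) m2 set" where
  "Zgrp eps = {g \<in> Ggrp eps. \<exists>z. g = M2 z e0 e0 z}"

definition Ugrp :: "'f::field \<Rightarrow> ('f \<Rightarrow> int) \<Rightarrow> ('f \<times> 'f) m2 set" where
  "Ugrp eps v = {M2 e1 (emul eps esqrt (emb b)) e0 e1 | b. b \<in> OF v}"

text \<open>J_d; note ceil(d/2) = (d+1) div 2 and ceil((d+1)/2) = (d+2) div 2.\<close>
definition Jgrp :: "'f::field \<Rightarrow> ('f \<Rightarrow> int) \<Rightarrow> nat \<Rightarrow> ('f \<times> 'f) m2 set" where
  "Jgrp eps v d = {g \<in> Ggrp eps.
      esub (m11 g) e1 \<in> pE v (int ((d + 1) div 2)) \<and>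
      esub (m22 g) e1 \<in> pE v (int ((d + 1) div 2)) \<and>
      m12 g \<in> pE v (int ((d + 1) div 2)) \<and>
      m21 g \<in> pE v (int ((d + 2) div 2))}"

text \<open>psi(x) = psi'((x + conj x)/2); note (x + conj x)/2 lies in F.\<close>
definition psiE :: "('f::field \<Rightarrow> complex) \<Rightarrow> 'f \<times> 'f \<Rightarrow> complex" where
  "psiE psi' z = psi' (fst (eadd z (econj z)) / 2)"

definition Xmat :: "'f::field \<Rightarrow> 'f \<Rightarrow> nat \<Rightarrow> ('f \<times> 'f) m2" where
  "Xmat eps varpi d = M2 e0 (emul eps (emb (inverse varpi ^ d)) esqrt) e0 e0"

definition PsiJ :: "'f::field \<Rightarrow> 'f \<Rightarrow> ('f \<Rightarrow> complex) \<Rightarrow> nat \<Rightarrow> ('f \<times> 'f) m2 \<Rightarrow> complex" where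
  "PsiJ eps varpi psi' d g = psiE psi' (mtrace (mmul eps (Xmat eps varpi d) (msub g mI)))"

definition ZUJ :: "'f::field \<Rightarrow> ('f \<Rightarrow> int) \<Rightarrow> nat \<Rightarrow> ('f \<times> 'f) m2 set" where
  "ZUJ eps v d = {mmul eps z (mmul eps u j) | z u j.
      z \<in> Zgrp eps \<and> u \<in> Ugrp eps v \<and> j \<in> Jgrp eps v d}"

text \<open>Psi_theta: theta on Z, trivial on U, Psi on J_d (well defined on Z U J_d).\<close>
definition PsiTheta :: "'f::field \<Rightarrow> ('f \<Rightarrow> int) \<Rightarrow> 'f \<Rightarrow> ('f \<Rightarrow> complex) \<Rightarrow>
    (('f \<times> 'f) m2 \<Rightarrow> complex) \<Rightarrow> nat \<Rightarrow> ('f \<times> 'f) m2 \<Rightarrow> complex" where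
  "PsiTheta eps v varpi psi' theta d h = (SOME c. \<exists>z u j.
      z \<in> Zgrp eps \<and> u \<in> Ugrp eps v \<and> j \<in> Jgrp eps v d \<and>
      h = mmul eps z (mmul eps u j) \<and> c = theta z * PsiJ eps varpi psi' d j)"

text \<open>Ind_H^K chi, realised as functions f on K (zero outside K) with
f(h k) = chi(h) f(k); K acts by right translation (g.f)(k) = f(k g).\<close>
definition IndSpace :: "'f::field \<Rightarrow> ('f \<times> 'f) m2 set \<Rightarrow> ('f \<times> 'f) m2 set \<Rightarrow>
    (('f \<times> 'f) m2 \<Rightarrow> complex) \<Rightarrow> (('f \<times> 'f) m2 \<Rightarrow> complex) set" where
  "IndSpace eps K H chi = {f. (\<forall>k. k \<notin> K \<longrightarrow> f k = 0) \<and>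
      (\<forall>h\<in>H. \<forall>k\<in>K. f (mmul eps h k) = chi h * f k)}"

definition Sd :: "'f::field \<Rightarrow> ('f \<Rightarrow> int) \<Rightarrow> 'f \<Rightarrow> ('f \<Rightarrow> complex) \<Rightarrow>
    (('f \<times> 'f) m2 \<Rightarrow> complex) \<Rightarrow> nat \<Rightarrow> (('f \<times> 'f) m2 \<Rightarrow> complex) set" where
  "Sd eps v varpi psi' theta d =
     IndSpace eps (Kgrp eps v) (ZUJ eps v d) (PsiTheta eps v varpi psi' theta d)"

text \<open>The direct sum of S_d over d with P d, realised as finitely supported
families (f_d)_d; and its subspace of K_n-fixed vectors.\<close>
definition tauSpace :: "'f::field \<Rightarrow> ('f \<Rightarrow> int) \<Rightarrow> 'f \<Rightarrow> ('f \<Rightarrow> complex) \<Rightarrow>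
    (('f \<times> 'f) m2 \<Rightarrow> complex) \<Rightarrow> (nat \<Rightarrow> bool) \<Rightarrow>
    (nat \<Rightarrow> ('f \<times> 'f) m2 \<Rightarrow> complex) set" where
  "tauSpace eps v varpi psi' theta P = {f.
      finite {d. f d \<noteq> (\<lambda>_. 0)} \<and>
      (\<forall>d. \<not> P d \<longrightarrow> f d = (\<lambda>_. 0)) \<and>
      (\<forall>d. P d \<longrightarrow> f d \<in> Sd eps v varpi psi' theta d)}"

definition fixedVecs :: "'f::field \<Rightarrow> ('f \<Rightarrow> int) \<Rightarrow> nat \<Rightarrow>
    (nat \<Rightarrow> ('f \<times> 'f) m2 \<Rightarrow> complex) set \<Rightarrow> (nat \<Rightarrow> ('f \<times> 'f) m2 \<Rightarrow> complex) set" where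
  "fixedVecs eps v n V = {f \<in> V. \<forall>d. \<forall>k\<in>Kgrp eps v. \<forall>g\<in>Kn eps v n.
      f d (mmul eps k g) = f d k}"

definition cscale :: "complex \<Rightarrow> (nat \<Rightarrow> 'b \<Rightarrow> complex) \<Rightarrow> (nat \<Rightarrow> 'b \<Rightarrow> complex)" where
  "cscale c f = (\<lambda>d x. c * f d x)"

definition cdim :: "(nat \<Rightarrow> 'b \<Rightarrow> complex) set \<Rightarrow> nat" where
  "cdim V = vector_space.dim cscale V"

end

theory Submission
  imports Defs
begin

locale LF =
  fixes v :: "'f::field \<Rightarrow> int" and eps varpi :: 'f
  assumes F: "nonarch_local_field v" and oddchar: "odd_residual_char v"
    and unif1: "varpi \<noteq> 0" and unif2: "v varpi = 1"
    and eps1: "eps \<noteq> 0" and eps2: "v eps = 0" and eps3: "\<not> (\<exists>x. x * x = eps)"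
begin

lemma vmult: "x \<noteq> 0 \<Longrightarrow> y \<noteq> 0 \<Longrightarrow> v (x * y) = v x + v y"
  using F unfolding nonarch_local_field_def by blast
lemma vadd: "x \<noteq> 0 \<Longrightarrow> y \<noteq> 0 \<Longrightarrow> x + y \<noteq> 0 \<Longrightarrow> v (x + y) \<ge> min (v x) (v y)"
  using F unfolding nonarch_local_field_def by blast
lemma complete_all: "\<forall>s :: nat \<Rightarrow> 'f. (\<forall>n. \<exists>N. \<forall>m\<ge>N. \<forall>k\<ge>N. s m - s k \<in> pF v n) \<longrightarrow>
         (\<exists>L. \<forall>n. \<exists>N. \<forall>m\<ge>N. s m - L \<in> pF v n)"
  using F unfolding nonarch_local_field_def by (elim conjE) assumption
lemma complete: fixes s :: "nat \<Rightarrow> 'f" shows "(\<forall>n. \<exists>N. \<forall>m\<ge>N. \<forall>k\<ge>N. s m - s k \<in> pF v n) \<Longrightarrow>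
         (\<exists>L. \<forall>n. \<exists>N. \<forall>m\<ge>N. s m - L \<in> pF v n)"
  by (rule mp[OF spec[OF complete_all]])
lemma resfin: "finite ((\<lambda>x. {y \<in> OF v. y - x \<in> pF v 1}) ` OF v)"
  using F unfolding nonarch_local_field_def by blast

lemma two_ne: "(2::'f) \<noteq> 0" and v2: "v 2 = 0"
  using oddchar unfolding odd_residual_char_def by auto

lemma v1: "v 1 = 0"
  using vmult[of 1 1] by simp
lemma vm1: "v (-1) = 0"
  using vmult[of "-1" "-1"] v1 by simp
lemma vminus: "v (- x) = v x"
  by (cases "x = 0") (use vmult[of "-1" x] vm1 in auto)
lemma vinv: "x \<noteq> 0 \<Longrightarrow> v (inverse x) = - v x"
  using vmult[of x "inverse x"] v1 by simp
lemma vdiv: "x \<noteq> 0 \<Longrightarrow> y \<noteq> 0 \<Longrightarrow> v (x / y) = v x - v y"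
  by (simp add: divide_inverse vmult vinv)
lemma vpow: "x \<noteq> 0 \<Longrightarrow> v (x ^ n) = int n * v x"
  by (induction n) (auto simp: v1 vmult algebra_simps)

lemma vdiff: "x \<noteq> 0 \<Longrightarrow> y \<noteq> 0 \<Longrightarrow> x - y \<noteq> 0 \<Longrightarrow> v (x - y) \<ge> min (v x) (v y)"
  using vadd[of x "-y"] by (simp add: vminus)

lemma vstrict: assumes "x \<noteq> 0" "y \<noteq> 0" "v x < v y" shows "x + y \<noteq> 0" "v (x + y) = v x"
proof -
  show xy: "x + y \<noteq> 0"
  proof
    assume "x + y = 0" then have "x = - y" by (simp add: eq_neg_iff_add_eq_0)
    then have "v x = v y" by (simp add: vminus)
    then show False using assms(3) by simp
  qed
  have 1: "v (x + y) \<ge> v x" using vadd[OF assms(1,2) xy] assms(3) by linarith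
  have "x + y - y \<noteq> 0" using assms(1) by simp
  then have "min (v (x+y)) (v y) \<le> v (x + y - y)" using vdiff[of "x+y" y] xy assms(2) by blast
  then have 2: "v x \<ge> min (v (x+y)) (v y)" by simp
  show "v (x + y) = v x" using 1 2 assms(3) by linarith
qed

lemma pF_iff: "x \<in> pF v n \<longleftrightarrow> x = 0 \<or> n \<le> v x"
  by (simp add: pF_def)
lemma pF_0[simp]: "0 \<in> pF v n"
  by (simp add: pF_def)
lemma pF_add: "x \<in> pF v n \<Longrightarrow> y \<in> pF v n \<Longrightarrow> x + y \<in> pF v n"
  unfolding pF_def using vadd[of x y] by force
lemma pF_minus: "x \<in> pF v n \<Longrightarrow> - x \<in> pF v n"
  unfolding pF_def by (auto simp: vminus)
lemma pF_minus_iff[simp]: "- x \<in> pF v n \<longleftrightarrow> x \<in> pF v n"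
  using pF_minus[of x n] pF_minus[of "-x" n] by auto
lemma pF_diff: "x \<in> pF v n \<Longrightarrow> y \<in> pF v n \<Longrightarrow> x - y \<in> pF v n"
  using pF_add[of x n "-y"] by (simp add: pF_minus)
lemma pF_mult: "x \<in> pF v a \<Longrightarrow> y \<in> pF v b \<Longrightarrow> x * y \<in> pF v (a + b)"
  unfolding pF_def by (cases "x = 0"; cases "y = 0") (auto simp: vmult)
lemma pF_mono: "a \<le> b \<Longrightarrow> x \<in> pF v b \<Longrightarrow> x \<in> pF v a"
  unfolding pF_def by auto
lemma pF_mult0: "x \<in> OF v \<Longrightarrow> y \<in> pF v b \<Longrightarrow> x * y \<in> pF v b"
  using pF_mult[of x 0 y b] by (simp add: OF_def)
lemma pF_mult0': "x \<in> pF v b \<Longrightarrow> y \<in> OF v \<Longrightarrow> x * y \<in> pF v b"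
  using pF_mult[of x b y 0] by (simp add: OF_def)
lemma pF_sum: "finite A \<Longrightarrow> (\<And>i. i \<in> A \<Longrightarrow> f i \<in> pF v n) \<Longrightarrow> sum f A \<in> pF v n"
  by (induction A rule: finite_induct) (auto intro: pF_add)
lemma OF_pF: "0 \<le> n \<Longrightarrow> x \<in> pF v n \<Longrightarrow> x \<in> OF v"
  unfolding OF_def using pF_mono by blast
lemma OF_1[simp]: "1 \<in> OF v"
  by (simp add: OF_def pF_def v1)
lemma not_1_p: "1 \<notin> pF v 1"
  by (simp add: pF_def v1)
lemma OF_add: "x \<in> OF v \<Longrightarrow> y \<in> OF v \<Longrightarrow> x + y \<in> OF v"
  by (simp add: OF_def pF_add)
lemma OF_diff: "x \<in> OF v \<Longrightarrow> y \<in> OF v \<Longrightarrow> x - y \<in> OF v"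
  by (simp add: OF_def pF_diff)
lemma OF_minus: "x \<in> OF v \<Longrightarrow> - x \<in> OF v"
  by (simp add: OF_def)
lemma OF_mult: "x \<in> OF v \<Longrightarrow> y \<in> OF v \<Longrightarrow> x * y \<in> OF v"
  using pF_mult[of x 0 y 0] by (simp add: OF_def)
lemma OF_0[simp]: "0 \<in> OF v" by (simp add: OF_def)
lemma OF_iff: "x \<in> OF v \<longleftrightarrow> x = 0 \<or> 0 \<le> v x"
  by (simp add: OF_def pF_def)
lemma OF_of_nat[simp]: "of_nat n \<in> OF v"
  by (induction n) (auto intro: OF_add)
lemma OF_numeral[simp]: "numeral n \<in> OF v"
  using OF_of_nat[of "numeral n"] by simp
lemma OF_eps[simp]: "eps \<in> OF v" by (simp add: OF_iff eps2)
lemma OF_pow: "x \<in> OF v \<Longrightarrow> x ^ n \<in> OF v"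
  by (induction n) (auto intro: OF_mult)
lemma OF_varpi[simp]: "varpi \<in> OF v" by (simp add: OF_iff unif2)

lemma pF_all: "(\<And>n. n \<ge> 0 \<Longrightarrow> x \<in> pF v n) \<Longrightarrow> x = 0"
proof (rule ccontr)
  assume a: "\<And>n. n \<ge> 0 \<Longrightarrow> x \<in> pF v n" and "x \<noteq> 0"
  then have "v x + 1 \<le> v x" using a[of "max 0 (v x + 1)"] by (auto simp: pF_def)
  then show False by simp
qed

lemma OF_dich: "x \<in> OF v \<Longrightarrow> x \<in> pF v 1 \<or> (x \<noteq> 0 \<and> v x = 0)"
  by (auto simp: OF_iff pF_def)

lemma unit_inv: "x \<noteq> 0 \<Longrightarrow> v x = 0 \<Longrightarrow> inverse x \<in> OF v"
  by (simp add: OF_iff vinv)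

lemma pF_div_unit: "x \<in> pF v n \<Longrightarrow> y \<noteq> 0 \<Longrightarrow> v y = 0 \<Longrightarrow> x / y \<in> pF v n"
  using pF_mult[of x n "inverse y" 0] unit_inv[of y] by (simp add: OF_def divide_inverse)

lemma varpi_pow: "varpi ^ k \<noteq> 0" "v (varpi ^ k) = int k"
  using unif1 unif2 by (auto simp: vpow)
lemma varpi_pow_p: "varpi ^ k \<in> pF v (int k)"
  using varpi_pow by (simp add: pF_def)
lemma inv_varpi_pow: "v (inverse varpi ^ d) = - int d" "inverse varpi ^ d \<noteq> 0"
  using varpi_pow[of d] by (auto simp: power_inverse vinv)

lemma p_mult_varpi: "x \<in> pF v n \<Longrightarrow> x * inverse varpi ^ d \<in> pF v (n - int d)"
  using pF_mult[of x n "inverse varpi ^ d" "- int d"] inv_varpi_pow[of d]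
  by (simp add: pF_def)

lemma unit_not_p: "x \<noteq> 0 \<Longrightarrow> v x = 0 \<Longrightarrow> x \<notin> pF v 1"
  by (simp add: pF_def)

lemma unit_add_p: assumes "x \<noteq> 0" "v x = 0" "y \<in> pF v 1" shows "x + y \<noteq> 0" "v (x + y) = 0"
proof -
  have c: "x + y \<noteq> 0 \<and> v (x + y) = 0"
  proof (cases "y = 0")
    case False then have "v y \<ge> 1" using assms(3) by (simp add: pF_def)
    then have "v x < v y" using assms(2) by linarith
    then show ?thesis using vstrict[of x y] assms(1,2) False by simp
  next
    case True then show ?thesis using assms(1,2) by simp
  qed
  from c show "x + y \<noteq> 0" by (rule conjunct1)
  from c show "v (x + y) = 0" by (rule conjunct2)
qed

lemma unit_mult: "x \<noteq> 0 \<Longrightarrow> v x = 0 \<Longrightarrow> y \<noteq> 0 \<Longrightarrow> v y = 0 \<Longrightarrow> v (x * y) = 0"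
  by (simp add: vmult)

lemma eps_unit_not_p: "eps \<notin> pF v 1" using unit_not_p eps1 eps2 by auto

lemma sq_p: assumes "x * x \<in> pF v 1" "x \<in> OF v" shows "x \<in> pF v 1"
proof (rule ccontr)
  assume "x \<notin> pF v 1"
  then have "x \<noteq> 0" "v x = 0" using OF_dich[OF assms(2)] by auto
  then have "x * x \<noteq> 0" "v (x * x) = 0" by (auto simp: vmult)
  then show False using assms(1) unit_not_p[of "x*x"] by simp
qed

lemma unit_of_sq_unit: assumes "x \<in> OF v" "x * x - eps \<in> pF v 1" shows "x \<noteq> 0" "v x = 0"
proof -
  have "x \<notin> pF v 1"
  proof
    assume "x \<in> pF v 1"
    then have "x * x \<in> pF v 1" using pF_mult0[OF assms(1)] by simp
    then have "x * x - (x * x - eps) \<in> pF v 1" using assms(2) pF_diff by blast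
    then show False using eps_unit_not_p by simp
  qed
  then show "x \<noteq> 0" "v x = 0" using OF_dich[OF assms(1)] by auto
qed

lemma hensel_sqrt: assumes x: "x \<in> OF v" "x * x - eps \<in> pF v 1" shows "\<exists>y. y * y = eps"
proof -
  define f where "f = (\<lambda>s::'f. s - (s * s - eps) / (2 * s))"
  define s where "s = (\<lambda>n. (f ^^ n) x)"
  have sS: "s (Suc n) = f (s n)" for n by (simp add: s_def)
  have s0: "s 0 = x" by (simp add: s_def)
  have P: "s n \<in> OF v \<and> s n * s n - eps \<in> pF v (int n + 1)" for n
  proof (induction n)
    case 0 then show ?case using x s0 by simp
  next
    case (Suc n)
    let ?a = "s n" let ?e = "s n * s n - eps"
    have a: "?a \<in> OF v" "?e \<in> pF v (int n + 1)" using Suc by auto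
    have e1: "?e \<in> pF v 1" using a(2) pF_mono[of 1 "int n + 1"] by simp
    have u: "?a \<noteq> 0" "v ?a = 0" using unit_of_sq_unit[OF a(1) e1] by auto
    have u2: "2 * ?a \<noteq> 0" "v (2 * ?a) = 0" using u two_ne v2 by (auto simp: vmult)
    have q: "?e / (2 * ?a) \<in> pF v (int n + 1)" using pF_div_unit[OF a(2) u2] .
    have q1: "?e / (2 * ?a) \<in> OF v" using OF_pF[OF _ q] by simp
    have sn: "s (Suc n) = ?a - ?e / (2 * ?a)" by (simp add: sS f_def)
    have "s (Suc n) * s (Suc n) - eps = (?e / (2 * ?a)) * (?e / (2 * ?a))"
    proof -
      have f4: "(4::'f) \<noteq> 0" using two_ne mult_eq_0_iff[of "2::'f" 2] by simp
      show ?thesis unfolding sn using u(1) two_ne f4 by (simp add: field_simps)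
    qed
    moreover have "(?e / (2 * ?a)) * (?e / (2 * ?a)) \<in> pF v (int (Suc n) + 1)"
      using pF_mult[OF q q] pF_mono[of "int (Suc n) + 1" "int n + 1 + (int n + 1)"] by simp
    ultimately show ?case using OF_diff[OF a(1) q1] sn by simp
  qed
  have step: "s (Suc n) - s n \<in> pF v (int n + 1)" for n
  proof -
    have a: "s n \<in> OF v" "s n * s n - eps \<in> pF v (int n + 1)" using P[of n] by auto
    have e1: "s n * s n - eps \<in> pF v 1" using a(2) pF_mono[of 1 "int n + 1"] by simp
    have u: "s n \<noteq> 0" "v (s n) = 0" using unit_of_sq_unit[OF a(1) e1] by auto
    have u2: "2 * s n \<noteq> 0" "v (2 * s n) = 0" using u two_ne v2 by (auto simp: vmult)
    have "s (Suc n) - s n = - ((s n * s n - eps) / (2 * s n))" by (simp add: sS f_def)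
    then show ?thesis using pF_div_unit[OF a(2) u2] by simp
  qed
  have cauchy0: "s (k + j) - s k \<in> pF v (int k + 1)" for k j
  proof (induction j)
    case 0 then show ?case by simp
  next
    case (Suc j)
    have "s (Suc (k + j)) - s (k + j) \<in> pF v (int k + 1)"
      using step[of "k + j"] pF_mono[of "int k + 1" "int (k+j) + 1"] by simp
    then have "(s (Suc (k + j)) - s (k + j)) + (s (k + j) - s k) \<in> pF v (int k + 1)"
      using Suc pF_add by blast
    then show ?case by simp
  qed
  have cauchy1: "m \<ge> N \<Longrightarrow> s m - s N \<in> pF v (int N + 1)" for m N
    using cauchy0[of N "m - N"] by simp
  have "\<forall>n. \<exists>N. \<forall>m\<ge>N. \<forall>k\<ge>N. s m - s k \<in> pF v n"
  proof
    fix n :: int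
    show "\<exists>N. \<forall>m\<ge>N. \<forall>k\<ge>N. s m - s k \<in> pF v n"
    proof (intro exI allI impI)
      fix m k assume mk: "m \<ge> nat n" "k \<ge> nat n"
      have "(s m - s (nat n)) - (s k - s (nat n)) \<in> pF v (int (nat n) + 1)"
        using cauchy1[OF mk(1)] cauchy1[OF mk(2)] pF_diff by blast
      then show "s m - s k \<in> pF v n" using pF_mono[of n "int (nat n) + 1"] by simp
    qed
  qed
  then obtain L where L: "\<forall>n. \<exists>N. \<forall>m\<ge>N. s m - L \<in> pF v n" using complete by blast
  have "L * L - eps \<in> pF v n" if n: "n \<ge> 0" for n
  proof -
    obtain N where N: "\<forall>m\<ge>N. s m - L \<in> pF v n" using L by blast
    define M where "M = max N (nat n)"
    have d: "s M - L \<in> pF v n" using N by (simp add: M_def)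
    have sM: "s M \<in> OF v" "s M * s M - eps \<in> pF v (int M + 1)" using P[of M] by auto
    have dO: "s M - L \<in> OF v" using OF_pF[OF n d] .
    have LO: "L + s M \<in> OF v"
    proof -
      have "L + s M = s M + s M - (s M - L)" by simp
      then show ?thesis using OF_diff[OF OF_add[OF sM(1) sM(1)] dO] by (simp add: add.commute)
    qed
    have "L * L - eps = (s M * s M - eps) - (s M - L) * (L + s M)"
      by (simp add: algebra_simps)
    moreover have "s M * s M - eps \<in> pF v n"
      using sM(2) pF_mono[of n "int M + 1"] by (simp add: M_def)
    moreover have "(s M - L) * (L + s M) \<in> pF v n"
      using pF_mult0'[OF d LO] .
    ultimately show ?thesis using pF_diff by metis
  qed
  then have "L * L - eps = 0" by (rule pF_all)
  then show ?thesis by auto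
qed

lemma eps_nonsq_mod: "x \<in> OF v \<Longrightarrow> x * x - eps \<notin> pF v 1"
  using hensel_sqrt eps3 by blast

lemma norm_p: assumes "a \<in> OF v" "b \<in> OF v" "a * a - eps * b * b \<in> pF v 1"
  shows "a \<in> pF v 1 \<and> b \<in> pF v 1"
proof -
  have bp: "b \<in> pF v 1"
  proof (rule ccontr)
    assume "b \<notin> pF v 1"
    then have u: "b \<noteq> 0" "v b = 0" using OF_dich[OF assms(2)] by auto
    then have u2: "b * b \<noteq> 0" "v (b * b) = 0" by (auto simp: vmult)
    have "(a * a - eps * b * b) / (b * b) \<in> pF v 1" using pF_div_unit[OF assms(3) u2] .
    moreover have "(a * a - eps * b * b) / (b * b) = (a / b) * (a / b) - eps"
      using u by (simp add: field_simps)
    moreover have "a / b \<in> OF v" using OF_mult[OF assms(1) unit_inv[OF u]] by (simp add: divide_inverse)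
    ultimately show False using eps_nonsq_mod[of "a / b"] by (simp add: times_divide_times_eq)
  qed
  have "eps * b * b \<in> pF v 1" using pF_mult0[OF OF_mult[OF OF_eps assms(2)] bp] by (simp add: mult.assoc)
  then have "a * a \<in> pF v 1" using pF_add[OF assms(3)] by fastforce
  then show ?thesis using sq_p assms bp by blast
qed

end

definition en :: "'f::field \<Rightarrow> 'f \<times> 'f \<Rightarrow> 'f" where
  "en eps z = fst z * fst z - eps * snd z * snd z"
definition einv :: "'f::field \<Rightarrow> 'f \<times> 'f \<Rightarrow> 'f \<times> 'f" where
  "einv eps z = (fst z / en eps z, - snd z / en eps z)"
definition minv :: "('f::field \<times> 'f) m2 \<Rightarrow> ('f \<times> 'f) m2" where
  "minv g = M2 (econj (m22 g)) (econj (m12 g)) (econj (m21 g)) (econj (m11 g))"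
definition ments :: "'a m2 \<Rightarrow> 'a set \<Rightarrow> bool" where
  "ments g P \<longleftrightarrow> m11 g \<in> P \<and> m12 g \<in> P \<and> m21 g \<in> P \<and> m22 g \<in> P"

lemmas edefs = eadd_def esub_def emul_def econj_def e0_def e1_def esqrt_def emb_def en_def

lemma fst_emul[simp]: "fst (emul eps z w) = fst z * fst w + eps * snd z * snd w" by (simp add: emul_def)
lemma snd_emul[simp]: "snd (emul eps z w) = fst z * snd w + snd z * fst w" by (simp add: emul_def)
lemma fst_eadd[simp]: "fst (eadd z w) = fst z + fst w" by (simp add: eadd_def)
lemma snd_eadd[simp]: "snd (eadd z w) = snd z + snd w" by (simp add: eadd_def)
lemma fst_esub[simp]: "fst (esub z w) = fst z - fst w" by (simp add: esub_def)
lemma snd_esub[simp]: "snd (esub z w) = snd z - snd w" by (simp add: esub_def)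
lemma fst_econj[simp]: "fst (econj z) = fst z" by (simp add: econj_def)
lemma snd_econj[simp]: "snd (econj z) = - snd z" by (simp add: econj_def)
lemma fst_e0[simp]: "fst e0 = 0" and snd_e0[simp]: "snd e0 = 0" by (simp_all add: e0_def)
lemma fst_e1[simp]: "fst e1 = 1" and snd_e1[simp]: "snd e1 = 0" by (simp_all add: e1_def)
lemma fst_esqrt[simp]: "fst esqrt = 0" and snd_esqrt[simp]: "snd esqrt = 1" by (simp_all add: esqrt_def)
lemma fst_emb[simp]: "fst (emb x) = x" and snd_emb[simp]: "snd (emb x) = 0" by (simp_all add: emb_def)
lemma fst_einv[simp]: "fst (einv eps z) = fst z / en eps z" by (simp add: einv_def)
lemma snd_einv[simp]: "snd (einv eps z) = - snd z / en eps z" by (simp add: einv_def)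
lemma prod_eqI': "fst x = fst y \<Longrightarrow> snd x = snd y \<Longrightarrow> x = y" by (simp add: prod_eq_iff)

lemma m2_eqI: "m11 g = m11 h \<Longrightarrow> m12 g = m12 h \<Longrightarrow> m21 g = m21 h \<Longrightarrow> m22 g = m22 h \<Longrightarrow> g = h"
  by (cases g; cases h) auto

lemma emul_comm: "emul eps z w = emul eps w z"
  by (rule prod_eqI') (simp_all add: algebra_simps)
lemma emul_assoc: "emul eps (emul eps x y) z = emul eps x (emul eps y z)"
  by (rule prod_eqI') (simp_all add: algebra_simps)
lemma emul_e1[simp]: "emul eps e1 z = z" "emul eps z e1 = z"
  by (rule prod_eqI'; simp)+
lemma emul_e0[simp]: "emul eps e0 z = e0" "emul eps z e0 = e0"
  by (rule prod_eqI'; simp)+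
lemma eadd_e0[simp]: "eadd e0 z = z" "eadd z e0 = z"
  by (rule prod_eqI'; simp)+
lemma esub_e0[simp]: "esub z e0 = z"
  by (rule prod_eqI'; simp)+
lemma econj_emul: "econj (emul eps z w) = emul eps (econj z) (econj w)"
  by (rule prod_eqI') (simp_all add: algebra_simps)
lemma econj_econj[simp]: "econj (econj z) = z" by (rule prod_eqI') simp_all
lemma en_mult: "en eps (emul eps z w) = en eps z * en eps w"
  by (simp add: en_def algebra_simps)
lemma en_conj[simp]: "en eps (econj z) = en eps z"
  by (simp add: en_def)
lemma emul_conj_self: "emul eps z (econj z) = emb (en eps z)"
  by (rule prod_eqI') (simp_all add: en_def algebra_simps)
lemma en_e1[simp]: "en eps e1 = 1" by (simp add: en_def)
lemma emb_mult: "emul eps (emb x) z = (x * fst z, x * snd z)"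
  by (rule prod_eqI') simp_all

lemma mmul_assoc: "mmul eps (mmul eps x y) z = mmul eps x (mmul eps y z)"
  by (simp add: mmul_def emul_def eadd_def algebra_simps)
lemma mmul_mI[simp]: "mmul eps mI g = g" "mmul eps g mI = g"
  by (cases g; simp add: mmul_def mI_def)+
lemma mct_mmul: "mct (mmul eps g h) = mmul eps (mct h) (mct g)"
  by (simp add: mmul_def mct_def emul_def eadd_def econj_def algebra_simps)
lemma mdet_mmul: "mdet eps (mmul eps g h) = emul eps (mdet eps g) (mdet eps h)"
  by (rule prod_eqI') (simp_all add: mdet_def mmul_def algebra_simps)

context LF begin

lemma en_zero_iff: "en eps z = 0 \<longleftrightarrow> z = e0"
proof
  assume h: "en eps z = 0"
  show "z = e0"
  proof (cases "snd z = 0")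
    case True then show ?thesis using h by (simp add: en_def prod_eq_iff)
  next
    case False
    have "(fst z / snd z) * (fst z / snd z) = eps"
      using h False by (simp add: en_def field_simps)
    then show ?thesis using eps3 by blast
  qed
qed (simp add: en_def)

lemma emul_einv: assumes "z \<noteq> e0" shows "emul eps z (einv eps z) = e1"
proof -
  have n: "en eps z \<noteq> 0" using en_zero_iff assms by simp
  have "fst z * (fst z / en eps z) + eps * snd z * (- snd z / en eps z) =
        (fst z * fst z - eps * snd z * snd z) / en eps z"
    using n by (simp add: field_simps)
  also have "\<dots> = 1" using n by (simp add: en_def)
  finally have 1: "fst z * (fst z / en eps z) + eps * snd z * (- snd z / en eps z) = 1" .
  have 2: "fst z * (- snd z / en eps z) + snd z * (fst z / en eps z) = 0"
    using n by (simp add: field_simps)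
  show ?thesis using 1 2 by (intro prod_eqI') simp_all
qed

lemma emul_nonzero: "z \<noteq> e0 \<Longrightarrow> w \<noteq> e0 \<Longrightarrow> emul eps z w \<noteq> e0"
  using en_zero_iff en_mult by (metis mult_eq_0_iff)

lemma mdet_mult_ne: "mdet eps g \<noteq> e0 \<Longrightarrow> mdet eps h \<noteq> e0 \<Longrightarrow> mdet eps (mmul eps g h) \<noteq> e0"
  by (simp add: mdet_mmul emul_nonzero)

lemma G_F: "M2 (a1,a2) (b1,b2) (c1,c2) (d1,d2) \<in> Ggrp eps \<longleftrightarrow>
   mdet eps (M2 (a1,a2) (b1,b2) (c1,c2) (d1,d2)) \<noteq> e0 \<and>
   a1*c1 - eps*a2*c2 = 0 \<and> b1*d1 - eps*b2*d2 = 0 \<and>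
   a1*d1 - eps*a2*d2 + c1*b1 - eps*c2*b2 = 1 \<and> a1*d2 - a2*d1 + c1*b2 - c2*b1 = 0"
proof -
  have t: "(2::'f) * x = 0 \<longleftrightarrow> x = 0" for x using two_ne by simp
  show ?thesis
    unfolding Ggrp_def mmul_def mct_def mw_def
    by (simp add: edefs algebra_simps t[simplified algebra_simps] prod_eq_iff two_ne) (auto simp: algebra_simps two_ne)
qed

lemma G_mult: assumes "g \<in> Ggrp eps" "h \<in> Ggrp eps" shows "mmul eps g h \<in> Ggrp eps"
proof -
  have g: "mdet eps g \<noteq> e0" "mmul eps (mct g) (mmul eps mw g) = mw" using assms(1) by (auto simp: Ggrp_def)
  have h: "mdet eps h \<noteq> e0" "mmul eps (mct h) (mmul eps mw h) = mw" using assms(2) by (auto simp: Ggrp_def)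
  have "mmul eps (mct (mmul eps g h)) (mmul eps mw (mmul eps g h)) =
        mmul eps (mct h) (mmul eps (mmul eps (mct g) (mmul eps mw g)) h)"
    by (simp add: mct_mmul mmul_assoc)
  also have "\<dots> = mw" using g h by simp
  finally show ?thesis using mdet_mult_ne[OF g(1) h(1)] by (simp add: Ggrp_def)
qed

lemma minv_G: assumes "g \<in> Ggrp eps"
  shows "mmul eps (minv g) g = mI" "mmul eps g (minv g) = mI" "minv g \<in> Ggrp eps"
proof -
  obtain a1 a2 b1 b2 c1 c2 d1 d2 where gg: "g = M2 (a1,a2) (b1,b2) (c1,c2) (d1,d2)"
    by (metis m2.exhaust prod.exhaust)
  have r: "a1*c1 - eps*a2*c2 = 0" "b1*d1 - eps*b2*d2 = 0"
   "a1*d1 - eps*a2*d2 + c1*b1 - eps*c2*b2 = 1" "a1*d2 - a2*d1 + c1*b2 - c2*b1 = 0"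
    using assms G_F unfolding gg by blast+
  show "mmul eps (minv g) g = mI"
    unfolding gg minv_def mmul_def mI_def edefs using r by simp (intro conjI; algebra)
  show "mmul eps g (minv g) = mI"
    unfolding gg minv_def mmul_def mI_def edefs using r by simp (intro conjI; algebra)
  have "mdet eps (minv g) = econj (mdet eps g)"
    unfolding gg minv_def mdet_def edefs by (simp add: algebra_simps)
  moreover have "mdet eps g \<noteq> e0" using assms by (simp add: Ggrp_def)
  ultimately have "mdet eps (minv g) \<noteq> e0" by (auto simp: e0_def econj_def prod_eq_iff)
  moreover have "c1*d1 - eps*c2*d2 = 0" using r by algebra
  moreover have "a1*b1 - eps*a2*b2 = 0" using r by algebra
  moreover have "d2*a1 - d1*a2 - c1*b2 + c2*b1 = 0" using r by algebra
  ultimately show "minv g \<in> Ggrp eps"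
    unfolding gg minv_def using r by (simp add: econj_def G_F algebra_simps)
qed

lemma mI_G: "mI \<in> Ggrp eps"
  unfolding mI_def e1_def e0_def by (simp add: G_F mdet_def prod_eq_iff)

end

definition eunit :: "'f::field \<Rightarrow> ('f \<Rightarrow> int) \<Rightarrow> 'f \<times> 'f \<Rightarrow> bool" where
  "eunit eps v z \<longleftrightarrow> z \<in> OE v \<and> en eps z \<noteq> 0 \<and> v (en eps z) = 0"

context LF begin

lemma pE_iff: "z \<in> pE v n \<longleftrightarrow> fst z \<in> pF v n \<and> snd z \<in> pF v n" by (simp add: pE_def)
lemma OE_iff: "z \<in> OE v \<longleftrightarrow> fst z \<in> OF v \<and> snd z \<in> OF v" by (simp add: OE_def pE_def OF_def)
lemma pE_0[simp]: "e0 \<in> pE v n" by (simp add: pE_iff)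
lemma OE_0[simp]: "e0 \<in> OE v" by (simp add: OE_iff)
lemma pE_add: "z \<in> pE v n \<Longrightarrow> w \<in> pE v n \<Longrightarrow> eadd z w \<in> pE v n" by (simp add: pE_iff pF_add)
lemma pE_diff: "z \<in> pE v n \<Longrightarrow> w \<in> pE v n \<Longrightarrow> esub z w \<in> pE v n" by (simp add: pE_iff pF_diff)
lemma pE_conj: "z \<in> pE v n \<Longrightarrow> econj z \<in> pE v n" by (simp add: pE_iff)
lemma pE_conj_iff[simp]: "econj z \<in> pE v n \<longleftrightarrow> z \<in> pE v n" by (simp add: pE_iff)
lemma OE_conj_iff[simp]: "econj z \<in> OE v \<longleftrightarrow> z \<in> OE v" by (simp add: OE_iff OF_iff vminus)
lemma pE_mono: "a \<le> b \<Longrightarrow> z \<in> pE v b \<Longrightarrow> z \<in> pE v a" by (auto simp: pE_iff intro: pF_mono)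
lemma OE_pE: "0 \<le> n \<Longrightarrow> z \<in> pE v n \<Longrightarrow> z \<in> OE v" by (simp add: OE_def pE_mono)
lemma OE_add: "z \<in> OE v \<Longrightarrow> w \<in> OE v \<Longrightarrow> eadd z w \<in> OE v" by (simp add: OE_def pE_add)
lemma OE_diff: "z \<in> OE v \<Longrightarrow> w \<in> OE v \<Longrightarrow> esub z w \<in> OE v" by (simp add: OE_def pE_diff)
lemma pE_mult: assumes "z \<in> pE v a" "w \<in> pE v b" shows "emul eps z w \<in> pE v (a + b)"
proof -
  have "eps * snd z \<in> pF v a" using pF_mult0[OF OF_eps] assms by (simp add: pE_iff)
  then show ?thesis using assms by (auto simp: pE_iff intro!: pF_add pF_mult)
qed
lemma OE_mult: "z \<in> OE v \<Longrightarrow> w \<in> OE v \<Longrightarrow> emul eps z w \<in> OE v"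
  using pE_mult[of z 0 w 0] by (simp add: OE_def)
lemma pE_mult0: "z \<in> OE v \<Longrightarrow> w \<in> pE v b \<Longrightarrow> emul eps z w \<in> pE v b"
  using pE_mult[of z 0 w b] by (simp add: OE_def)
lemma pE_mult0': "z \<in> pE v b \<Longrightarrow> w \<in> OE v \<Longrightarrow> emul eps z w \<in> pE v b"
  using pE_mult[of z b w 0] by (simp add: OE_def)
lemma OE_e1[simp]: "e1 \<in> OE v" by (simp add: OE_iff)
lemma e1_not_p: "e1 \<notin> pE v 1" by (simp add: pE_iff not_1_p)
lemma emb_pE[simp]: "emb x \<in> pE v n \<longleftrightarrow> x \<in> pF v n" by (simp add: pE_iff)
lemma emb_OE[simp]: "emb x \<in> OE v \<longleftrightarrow> x \<in> OF v" by (simp add: OE_iff)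
lemma esqrt_OE[simp]: "esqrt \<in> OE v" by (simp add: OE_iff)

lemma en_pE: assumes "z \<in> pE v a" shows "en eps z \<in> pF v (a + a)"
proof -
  have "eps * snd z \<in> pF v a" using pF_mult0[OF OF_eps] assms by (simp add: pE_iff)
  moreover have "snd z \<in> pF v a" "fst z \<in> pF v a" using assms by (auto simp: pE_iff)
  ultimately have 1: "eps * snd z * snd z \<in> pF v (a + a)" and 2: "fst z * fst z \<in> pF v (a + a)"
    by (metis pF_mult)+
  show ?thesis unfolding en_def using pF_diff[OF 2 1] by simp
qed
lemma en_OE: "z \<in> OE v \<Longrightarrow> en eps z \<in> OF v"
  using en_pE[of z 0] by (simp add: OE_def OF_def)

lemma E_dich: assumes "z \<in> OE v" shows "z \<in> pE v 1 \<or> eunit eps v z"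
proof (cases "z \<in> pE v 1")
  case False
  have "en eps z \<notin> pF v 1"
    using norm_p[of "fst z" "snd z"] assms False by (auto simp: OE_iff pE_iff en_def)
  then show ?thesis using OF_dich[OF en_OE[OF assms]] assms by (auto simp: eunit_def)
qed simp

lemma eunit_not_p: assumes "eunit eps v z" shows "z \<notin> pE v 1"
proof
  assume "z \<in> pE v 1"
  then have "en eps z \<in> pF v 2" using en_pE[of z 1] by simp
  then show False using assms by (auto simp: eunit_def pF_def)
qed

lemma eunit_OE: "eunit eps v z \<Longrightarrow> z \<in> OE v" by (simp add: eunit_def)
lemma eunit_ne: "eunit eps v z \<Longrightarrow> z \<noteq> e0" by (auto simp: eunit_def en_def)
lemma eunit_iff: "z \<in> OE v \<Longrightarrow> eunit eps v z \<longleftrightarrow> z \<notin> pE v 1"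
  using E_dich eunit_not_p by blast
lemma eunit_e1[simp]: "eunit eps v e1" by (simp add: eunit_def v1)
lemma eunit_mult: "eunit eps v z \<Longrightarrow> eunit eps v w \<Longrightarrow> eunit eps v (emul eps z w)"
  by (simp add: eunit_def en_mult OE_mult vmult)
lemma eunit_conj: "eunit eps v z \<Longrightarrow> eunit eps v (econj z)"
  by (simp add: eunit_def)
lemma einv_OE: assumes "eunit eps v z" shows "einv eps z \<in> OE v"
proof -
  have i: "inverse (en eps z) \<in> OF v" using assms unit_inv by (simp add: eunit_def)
  have "fst z * inverse (en eps z) \<in> OF v" "- snd z * inverse (en eps z) \<in> OF v"
    using assms i by (auto simp: eunit_def OE_iff intro!: OF_mult OF_minus)
  then show ?thesis by (simp add: OE_iff divide_inverse)
qed
lemma einv_mult: "eunit eps v z \<Longrightarrow> emul eps z (einv eps z) = e1"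
  using emul_einv eunit_ne by blast
lemma einv_mult': "eunit eps v z \<Longrightarrow> emul eps (einv eps z) z = e1"
  using einv_mult emul_comm by metis
lemma eunit_einv: assumes "eunit eps v z" shows "eunit eps v (einv eps z)"
proof -
  have "einv eps z \<notin> pE v 1"
  proof
    assume "einv eps z \<in> pE v 1"
    then have "emul eps z (einv eps z) \<in> pE v 1" using pE_mult0[OF eunit_OE[OF assms]] by blast
    then show False using einv_mult[OF assms] e1_not_p by simp
  qed
  then show ?thesis using eunit_iff einv_OE[OF assms] by blast
qed
lemma eunit_add_p: assumes "eunit eps v z" "w \<in> pE v 1" shows "eunit eps v (eadd z w)"
proof -
  have o: "eadd z w \<in> OE v" using OE_add[OF eunit_OE[OF assms(1)] OE_pE[OF _ assms(2)]] by simp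
  have "eadd z w \<notin> pE v 1"
  proof
    assume "eadd z w \<in> pE v 1"
    then have "esub (eadd z w) w \<in> pE v 1" using pE_diff assms(2) by blast
    moreover have "esub (eadd z w) w = z" by (rule prod_eqI') simp_all
    ultimately show False using eunit_not_p[OF assms(1)] by simp
  qed
  then show ?thesis using eunit_iff o by blast
qed
lemma eunit_mult_pE: assumes "eunit eps v u" shows "emul eps u z \<in> pE v n \<longleftrightarrow> z \<in> pE v n"
proof
  assume "emul eps u z \<in> pE v n"
  then have "emul eps (einv eps u) (emul eps u z) \<in> pE v n" using pE_mult0 einv_OE[OF assms] by blast
  then show "z \<in> pE v n" using einv_mult'[OF assms] by (simp add: emul_assoc[symmetric])
qed (use pE_mult0 eunit_OE[OF assms] in blast)

lemma en_eq1_OE: assumes "en eps z = 1" shows "z \<in> OE v"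
proof (rule ccontr)
  assume nz: "z \<notin> OE v"
  have key: "False" if a: "a \<noteq> 0" "v a < 0" "fst z / a \<in> OF v" "snd z / a \<in> OF v"
     "fst z / a \<notin> pF v 1 \<or> snd z / a \<notin> pF v 1" for a
  proof -
    define w where "w = (fst z / a, snd z / a)"
    have wO: "w \<in> OE v" using a by (simp add: w_def OE_iff)
    have "w \<notin> pE v 1" using a by (auto simp: w_def pE_iff)
    then have u: "eunit eps v w" using eunit_iff wO by blast
    have "en eps w = en eps z / (a * a)" using a(1) by (simp add: w_def en_def field_simps)
    then have "en eps w = inverse (a * a)" using assms by (simp add: divide_inverse)
    then have "v (en eps w) = - (v a + v a)" using a(1) by (simp add: vinv vmult)
    then show False using u a(2) by (simp add: eunit_def)
  qed
  show False
  proof (cases "fst z = 0 \<or> (snd z \<noteq> 0 \<and> v (snd z) \<le> v (fst z))")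
    case True
    then have s: "snd z \<noteq> 0" using nz by (auto simp: OE_iff)
    have vs: "v (snd z) < 0" using nz True s by (auto simp: OE_iff OF_iff)
    have "fst z / snd z \<in> OF v" using True s by (cases "fst z = 0") (auto simp: OF_iff vdiv)
    moreover have "snd z / snd z \<notin> pF v 1" using s not_1_p by simp
    ultimately show False using key[of "snd z"] s vs by simp
  next
    case False
    then have f: "fst z \<noteq> 0" by auto
    have vf: "v (fst z) < 0" using nz False f by (auto simp: OE_iff OF_iff)
    have "snd z / fst z \<in> OF v" using False f by (cases "snd z = 0") (auto simp: OF_iff vdiv)
    moreover have "fst z / fst z \<notin> pF v 1" using f not_1_p by simp
    ultimately show False using key[of "fst z"] f vf by simp
  qed
qed

lemma ments_mult: assumes "ments x (pE v a)" "ments y (pE v b)"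
  shows "ments (mmul eps x y) (pE v (a + b))"
  using assms unfolding ments_def mmul_def by (auto intro!: pE_add pE_mult)

lemma ments_OE_mult: "ments x (OE v) \<Longrightarrow> ments y (OE v) \<Longrightarrow> ments (mmul eps x y) (OE v)"
  using ments_mult[of x 0 y 0] by (simp add: OE_def)

lemma ments_minv: "ments g (pE v n) \<Longrightarrow> ments (minv g) (pE v n)"
  by (simp add: ments_def minv_def)
lemma ments_minv_OE: "ments g (OE v) \<Longrightarrow> ments (minv g) (OE v)"
  by (simp add: ments_def minv_def)

lemma K_iff: "g \<in> Kgrp eps v \<longleftrightarrow> g \<in> Ggrp eps \<and> ments g (OE v)"
  by (simp add: Kgrp_def ments_def)
lemma Kn_iff: "g \<in> Kn eps v n \<longleftrightarrow> g \<in> Kgrp eps v \<and> ments (msub g mI) (pE v (int n))"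
  by (simp add: Kn_def ments_def Let_def)

lemma K_mult: "g \<in> Kgrp eps v \<Longrightarrow> h \<in> Kgrp eps v \<Longrightarrow> mmul eps g h \<in> Kgrp eps v"
  by (simp add: K_iff G_mult ments_OE_mult)
lemma K_minv: "g \<in> Kgrp eps v \<Longrightarrow> minv g \<in> Kgrp eps v"
  by (simp add: K_iff minv_G ments_minv_OE)
lemma mI_K: "mI \<in> Kgrp eps v"
  using mI_G by (simp add: K_iff ments_def mI_def)
lemma K_G: "g \<in> Kgrp eps v \<Longrightarrow> g \<in> Ggrp eps" by (simp add: K_iff)

lemma msub_conj_ident: "msub (mmul eps (mmul eps k g) k') (mmul eps (mmul eps k mI) k') =
   mmul eps (mmul eps k (msub g mI)) k'"
  by (simp add: msub_def mmul_def mI_def edefs algebra_simps)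

lemma Kn_normal: assumes k: "k \<in> Kgrp eps v" and k': "k' \<in> Kgrp eps v" and kk: "mmul eps k k' = mI"
  and g: "g \<in> Kn eps v n" shows "mmul eps (mmul eps k g) k' \<in> Kn eps v n"
proof -
  have gK: "g \<in> Kgrp eps v" using g by (simp add: Kn_iff)
  have "ments (mmul eps (mmul eps k (msub g mI)) k') (pE v (0 + int n + 0))"
    by (rule ments_mult[OF ments_mult]) (use k k' g in \<open>auto simp: K_iff Kn_iff OE_def\<close>)
  then have "ments (msub (mmul eps (mmul eps k g) k') mI) (pE v (int n))"
    using msub_conj_ident[of k g k'] kk by simp
  then show ?thesis using K_mult[OF K_mult[OF k gK] k'] by (simp add: Kn_iff)
qed

lemma Kn_K: "g \<in> Kn eps v n \<Longrightarrow> g \<in> Kgrp eps v" by (simp add: Kn_iff)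
lemma Kn_mono: "n \<le> n' \<Longrightarrow> g \<in> Kn eps v n' \<Longrightarrow> g \<in> Kn eps v n"
  by (auto simp: Kn_iff ments_def intro: pE_mono[of "int n" "int n'"])

end

definition zmat :: "'f::field \<times> 'f \<Rightarrow> ('f \<times> 'f) m2" where "zmat l = M2 l e0 e0 l"
definition umat :: "'f::field \<Rightarrow> ('f \<times> 'f) m2" where "umat b = M2 e1 (0, b) e0 e1"

lemma zmat_sel[simp]: "m11 (zmat l) = l" "m12 (zmat l) = e0" "m21 (zmat l) = e0" "m22 (zmat l) = l"
  by (simp_all add: zmat_def)
lemma umat_sel[simp]: "m11 (umat b) = e1" "m12 (umat b) = (0, b)" "m21 (umat b) = e0" "m22 (umat b) = e1"
  by (simp_all add: umat_def)
lemma mI_sel[simp]: "m11 mI = e1" "m12 mI = e0" "m21 mI = e0" "m22 mI = e1"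
  by (simp_all add: mI_def)

lemma mmul_sel[simp]:
  "m11 (mmul eps g h) = eadd (emul eps (m11 g) (m11 h)) (emul eps (m12 g) (m21 h))"
  "m12 (mmul eps g h) = eadd (emul eps (m11 g) (m12 h)) (emul eps (m12 g) (m22 h))"
  "m21 (mmul eps g h) = eadd (emul eps (m21 g) (m11 h)) (emul eps (m22 g) (m21 h))"
  "m22 (mmul eps g h) = eadd (emul eps (m21 g) (m12 h)) (emul eps (m22 g) (m22 h))"
  by (simp_all add: mmul_def)
lemma msub_sel[simp]:
  "m11 (msub g h) = esub (m11 g) (m11 h)" "m12 (msub g h) = esub (m12 g) (m12 h)"
  "m21 (msub g h) = esub (m21 g) (m21 h)" "m22 (msub g h) = esub (m22 g) (m22 h)"
  by (simp_all add: msub_def)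
lemma minv_sel[simp]:
  "m11 (minv g) = econj (m22 g)" "m12 (minv g) = econj (m12 g)"
  "m21 (minv g) = econj (m21 g)" "m22 (minv g) = econj (m11 g)"
  by (simp_all add: minv_def)

lemma zmat_comm: "mmul eps (zmat l) g = mmul eps g (zmat l)"
  by (rule m2_eqI) (simp_all add: emul_comm)
lemma zmat_mult: "mmul eps (zmat l) (zmat l') = zmat (emul eps l l')"
  by (rule m2_eqI) simp_all
lemma zmat_e1: "zmat e1 = mI" by (simp add: zmat_def mI_def)
lemma umat_mult: "mmul eps (umat b) (umat b') = umat (b + b')"
  by (rule m2_eqI) (simp_all add: prod_eq_iff)
lemma umat_0: "umat 0 = mI" by (simp add: umat_def mI_def e0_def)
lemma Ugrp_umat: "Ugrp eps v = umat ` OF v"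
proof -
  have "emul eps esqrt (emb b) = (0, b)" for b :: 'a by (rule prod_eqI') simp_all
  then show ?thesis by (auto simp: Ugrp_def umat_def)
qed

context LF begin

lemma zmat_G: "zmat l \<in> Ggrp eps \<longleftrightarrow> en eps l = 1"
proof -
  obtain a b where l: "l = (a, b)" by (cases l)
  have "mdet eps (zmat l) = emul eps l l" by (rule prod_eqI') (simp_all add: mdet_def zmat_def)
  moreover have "en eps l = 1 \<Longrightarrow> emul eps l l \<noteq> e0"
    using emul_nonzero[of l l] en_zero_iff[of l] by auto
  ultimately show ?thesis unfolding zmat_def l e0_def
    by (auto simp: G_F en_def algebra_simps e0_def)
qed
lemma Zgrp_zmat: "Zgrp eps = zmat ` {l. en eps l = 1}"
  using zmat_G by (auto simp: Zgrp_def zmat_def[symmetric])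
lemma zmat_K: "en eps l = 1 \<Longrightarrow> zmat l \<in> Kgrp eps v"
  using zmat_G en_eq1_OE by (simp add: K_iff ments_def)
lemma umat_G: "umat b \<in> Ggrp eps"
  by (simp add: umat_def e1_def e0_def G_F mdet_def prod_eq_iff)
lemma umat_K: "b \<in> OF v \<Longrightarrow> umat b \<in> Kgrp eps v"
  using umat_G by (simp add: K_iff ments_def OE_iff)

lemma conj_mult_en: "emul eps (econj l) l = emb (en eps l)"
  by (rule prod_eqI') (simp_all add: en_def algebra_simps)

end

definition mm :: "nat \<Rightarrow> int" where "mm d = int ((d + 1) div 2)"
definition mm' :: "nat \<Rightarrow> int" where "mm' d = int ((d + 2) div 2)"
lemma mm_sum: "mm d + mm' d = int d + 1" by (simp add: mm_def mm'_def)
lemma mm_ge1: "d \<ge> 1 \<Longrightarrow> mm d \<ge> 1" by (simp add: mm_def)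
lemma mm'_ge1: "mm' d \<ge> 1" by (simp add: mm'_def)
lemma mm_le: "mm d \<le> mm' d" by (simp add: mm_def mm'_def)

lemma J_iff: "g \<in> Jgrp eps v d \<longleftrightarrow> g \<in> Ggrp eps \<and> esub (m11 g) e1 \<in> pE v (mm d) \<and>
  esub (m22 g) e1 \<in> pE v (mm d) \<and> m12 g \<in> pE v (mm d) \<and> m21 g \<in> pE v (mm' d)"
  by (simp add: Jgrp_def mm_def mm'_def)

context LF begin

lemma pE_mm_1: "d \<ge> 1 \<Longrightarrow> z \<in> pE v (mm d) \<Longrightarrow> z \<in> pE v 1"
  using mm_ge1 pE_mono by blast
lemma pE_mm'_1: "z \<in> pE v (mm' d) \<Longrightarrow> z \<in> pE v 1"
  using mm'_ge1 pE_mono by blast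
lemma pE_mm_O: "z \<in> pE v (mm d) \<Longrightarrow> z \<in> OE v"
  using OE_pE[of "mm d"] by (simp add: mm_def)
lemma pE_mm'_O: "z \<in> pE v (mm' d) \<Longrightarrow> z \<in> OE v"
  using OE_pE[of "mm' d"] by (simp add: mm'_def)
lemma pE_mm'_to_mm: "z \<in> pE v (mm' d) \<Longrightarrow> z \<in> pE v (mm d)"
  using mm_le pE_mono by blast
lemma pE_prod1: "z \<in> pE v (mm d) \<Longrightarrow> w \<in> pE v (mm' d) \<Longrightarrow> emul eps z w \<in> pE v (int d + 1)"
  using pE_mult mm_sum by metis
lemma pE_prod2: "z \<in> pE v (mm' d) \<Longrightarrow> w \<in> pE v (mm d) \<Longrightarrow> emul eps z w \<in> pE v (int d + 1)"
  using pE_mult mm_sum by (metis add.commute)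

lemma one_plus_O: "esub z e1 \<in> pE v n \<Longrightarrow> 0 \<le> n \<Longrightarrow> z \<in> OE v"
proof -
  assume a: "esub z e1 \<in> pE v n" "0 \<le> n"
  have "eadd (esub z e1) e1 = z" by (rule prod_eqI') simp_all
  then show ?thesis using OE_add[OF OE_pE[OF a(2) a(1)] OE_e1] by simp
qed

lemma one_plus_unit: "esub z e1 \<in> pE v 1 \<Longrightarrow> eunit eps v z"
proof -
  assume a: "esub z e1 \<in> pE v 1"
  have "eadd e1 (esub z e1) = z" by (rule prod_eqI') simp_all
  then show ?thesis using eunit_add_p[OF eunit_e1 a] by simp
qed

lemma J_G: "j \<in> Jgrp eps v d \<Longrightarrow> j \<in> Ggrp eps" by (simp add: J_iff)

lemma J_K: assumes "j \<in> Jgrp eps v d" shows "j \<in> Kgrp eps v"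
  using assms one_plus_O[of "m11 j" "mm d"] one_plus_O[of "m22 j" "mm d"]
  by (auto simp: J_iff K_iff ments_def mm_def intro: pE_mm_O pE_mm'_O)

lemma J_mult: assumes "d \<ge> 1" "j1 \<in> Jgrp eps v d" "j2 \<in> Jgrp eps v d"
  shows "mmul eps j1 j2 \<in> Jgrp eps v d"
proof -
  have O1: "ments j1 (OE v)" "ments j2 (OE v)" using J_K assms by (auto simp: K_iff)
  note j1 = assms(2)[unfolded J_iff] and j2 = assms(3)[unfolded J_iff]
  have i11: "esub (m11 (mmul eps j1 j2)) e1 =
     eadd (eadd (emul eps (esub (m11 j1) e1) (m11 j2)) (esub (m11 j2) e1)) (emul eps (m12 j1) (m21 j2))"
    by (rule prod_eqI') (simp_all add: algebra_simps)
  have i22: "esub (m22 (mmul eps j1 j2)) e1 =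
     eadd (eadd (emul eps (esub (m22 j1) e1) (m22 j2)) (esub (m22 j2) e1)) (emul eps (m21 j1) (m12 j2))"
    by (rule prod_eqI') (simp_all add: algebra_simps)
  have "esub (m11 (mmul eps j1 j2)) e1 \<in> pE v (mm d)"
    unfolding i11 using j1 j2 O1
    by (intro pE_add pE_mult0' pE_mult0) (auto simp: ments_def intro: pE_mm'_O pE_mm_O)
  moreover have "esub (m22 (mmul eps j1 j2)) e1 \<in> pE v (mm d)"
    unfolding i22 using j1 j2 O1
    by (intro pE_add pE_mult0' pE_mult0) (auto simp: ments_def intro: pE_mm'_O pE_mm_O)
  moreover have "m12 (mmul eps j1 j2) \<in> pE v (mm d)"
    using j1 j2 O1 by (simp, intro pE_add pE_mult0' pE_mult0) (auto simp: ments_def)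
  moreover have "m21 (mmul eps j1 j2) \<in> pE v (mm' d)"
    using j1 j2 O1 by (simp, intro pE_add pE_mult0' pE_mult0) (auto simp: ments_def)
  ultimately show ?thesis using G_mult j1 j2 by (simp add: J_iff)
qed

lemma J_conjU: assumes "j \<in> Jgrp eps v d" "b \<in> OF v"
  shows "mmul eps (mmul eps (umat (- b)) j) (umat b) \<in> Jgrp eps v d"
    "m21 (mmul eps (mmul eps (umat (- b)) j) (umat b)) = m21 j"
proof -
  note jj = assms(1)[unfolded J_iff]
  have O1: "ments j (OE v)" using J_K assms by (auto simp: K_iff)
  have x: "((0::'f), b) \<in> OE v" "((0::'f), - b) \<in> OE v" using assms(2) by (auto simp: OE_iff intro: OF_minus)
  let ?g = "mmul eps (mmul eps (umat (- b)) j) (umat b)"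
  have i11: "esub (m11 ?g) e1 = eadd (esub (m11 j) e1) (emul eps (0, - b) (m21 j))"
    by (rule prod_eqI') (simp_all add: algebra_simps)
  have i22: "esub (m22 ?g) e1 = eadd (esub (m22 j) e1) (emul eps (m21 j) (0, b))"
    by (rule prod_eqI') (simp_all add: algebra_simps)
  have i12: "m12 ?g = eadd (eadd (emul eps (0, b) (esub (m11 j) e1)) (emul eps (0, - b) (esub (m22 j) e1)))
     (eadd (m12 j) (emul eps (emul eps (0, - b) (m21 j)) (0, b)))"
    by (rule prod_eqI') (simp_all add: algebra_simps)
  show "m21 ?g = m21 j" by (rule prod_eqI') simp_all
  have "esub (m11 ?g) e1 \<in> pE v (mm d)" unfolding i11 using jj x
    by (intro pE_add pE_mult0) (auto intro: pE_mm'_to_mm)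
  moreover have "esub (m22 ?g) e1 \<in> pE v (mm d)" unfolding i22 using jj x
    by (intro pE_add pE_mult0') (auto intro: pE_mm'_to_mm)
  moreover have "m12 ?g \<in> pE v (mm d)" unfolding i12 using jj x
    by (intro pE_add pE_mult0 pE_mult0' OE_mult) (auto intro: pE_mm'_to_mm)
  moreover have "m21 ?g \<in> pE v (mm' d)" using jj \<open>m21 ?g = m21 j\<close> by simp
  moreover have "?g \<in> Ggrp eps" using G_mult[OF G_mult[OF umat_G jj[THEN conjunct1]] umat_G] .
  ultimately show "?g \<in> Jgrp eps v d" by (simp add: J_iff)
qed

lemma PsiJ_eq: "PsiJ eps varpi psi' d g = psi' (eps * inverse varpi ^ d * snd (m21 g))"
proof -
  have "fst (eadd z (econj z)) / 2 = fst z" for z :: "'f \<times> 'f"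
    using two_ne by simp
  then show ?thesis unfolding PsiJ_def psiE_def mtrace_def Xmat_def
    by (simp add: algebra_simps two_ne)
qed

lemma A_p1: "x \<in> pF v (int d + 1) \<Longrightarrow> eps * inverse varpi ^ d * x \<in> pF v 1"
  using pF_mult0[OF OF_eps p_mult_varpi[of x "int d + 1" d]] by (simp add: algebra_simps)

end

locale LP = LF v eps varpi for v :: "'f::field \<Rightarrow> int" and eps varpi +
  fixes psi' :: "'f \<Rightarrow> complex" and theta :: "('f \<times> 'f) m2 \<Rightarrow> complex"
  assumes psi_add: "\<forall>x y. psi' (x + y) = psi' x * psi' y"
    and psi_triv: "\<forall>x\<in>pF v 1. psi' x = 1"
    and psi_nontriv: "\<exists>x\<in>OF v. psi' x \<noteq> 1"
    and theta_mult: "\<forall>z\<in>Zgrp eps. \<forall>z'\<in>Zgrp eps. theta (mmul eps z z') = theta z * theta z'"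
    and theta_triv: "\<forall>z\<in>Zgrp eps \<inter> Kn eps v 1. theta z = 1"
begin

lemma psi_cong: "x - y \<in> pF v 1 \<Longrightarrow> psi' x = psi' y"
  using psi_add psi_triv by (metis add_diff_cancel_left' diff_add_cancel mult.right_neutral)

lemma PsiJ_mult: assumes "d \<ge> 1" "j1 \<in> Jgrp eps v d" "j2 \<in> Jgrp eps v d"
  shows "PsiJ eps varpi psi' d (mmul eps j1 j2) = PsiJ eps varpi psi' d j1 * PsiJ eps varpi psi' d j2"
proof -
  note j1 = assms(2)[unfolded J_iff] and j2 = assms(3)[unfolded J_iff]
  let ?A = "eps * inverse varpi ^ d"
  define e where "e = eadd (emul eps (m21 j1) (esub (m11 j2) e1)) (emul eps (esub (m22 j1) e1) (m21 j2))"
  have eq: "snd (m21 (mmul eps j1 j2)) = snd (m21 j1) + snd (m21 j2) + snd e"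
    unfolding e_def by (simp add: algebra_simps)
  have "e \<in> pE v (int d + 1)" unfolding e_def using j1 j2
    by (intro pE_add pE_prod1 pE_prod2) auto
  then have "?A * snd e \<in> pF v 1" using A_p1 by (simp add: pE_iff)
  moreover have "?A * snd (m21 (mmul eps j1 j2)) - (?A * snd (m21 j1) + ?A * snd (m21 j2)) = ?A * snd e"
    unfolding eq by (simp add: algebra_simps)
  ultimately have "psi' (?A * snd (m21 (mmul eps j1 j2))) = psi' (?A * snd (m21 j1) + ?A * snd (m21 j2))"
    by (intro psi_cong) simp
  then show ?thesis using psi_add by (simp add: PsiJ_eq)
qed

end

lemma emb1: "emb (1::'f::field) = e1" by (simp add: emb_def e1_def)

lemma E_cancel: fixes x :: "'f::field \<times> 'f" assumes "emul eps x y = e1"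
  shows "emul eps (esub (emul eps r x) x) y = esub r e1"
proof -
  have h: "fst x * fst y + eps * snd x * snd y = 1" "fst x * snd y + snd x * fst y = 0"
    using assms by (auto simp: prod_eq_iff)
  show ?thesis
    apply (rule prod_eqI')
    using h by (simp_all add: algebra_simps) (algebra, algebra)
qed

context LF begin

lemma conj_self_1: "en eps l = 1 \<Longrightarrow> emul eps l (econj l) = e1"
  by (simp add: emul_conj_self emb1)
lemma conj_self_1': "en eps l = 1 \<Longrightarrow> emul eps (econj l) l = e1"
  by (simp add: conj_mult_en emb1)

lemma zmat_Kn1: assumes "en eps r = 1" "esub r e1 \<in> pE v 1" shows "zmat r \<in> Zgrp eps \<inter> Kn eps v 1"
  using zmat_K[OF assms(1)] zmat_G assms Zgrp_zmat
  by (auto simp: Kn_iff ments_def)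

lemma H_mem: "h \<in> ZUJ eps v d \<longleftrightarrow> (\<exists>l b j. en eps l = 1 \<and> b \<in> OF v \<and> j \<in> Jgrp eps v d \<and>
   h = mmul eps (zmat l) (mmul eps (umat b) j))"
  unfolding ZUJ_def Zgrp_zmat Ugrp_umat by blast

lemma H_K: "h \<in> ZUJ eps v d \<Longrightarrow> h \<in> Kgrp eps v"
  unfolding H_mem using zmat_K umat_K J_K K_mult by blast

lemma H_entries: assumes "h \<in> ZUJ eps v d"
  shows "m21 h \<in> pE v (mm' d)" "\<exists>l t. en eps l = 1 \<and> esub t e1 \<in> pE v (mm d) \<and> m22 h = emul eps l t"
proof -
  obtain l b j where h: "en eps l = 1" "b \<in> OF v" "j \<in> Jgrp eps v d"
    "h = mmul eps (zmat l) (mmul eps (umat b) j)" using assms H_mem by blast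
  have lO: "l \<in> OE v" using en_eq1_OE h(1) .
  have e: "m21 h = emul eps l (m21 j)" "m22 h = emul eps l (m22 j)" using h(4) by simp_all
  show "m21 h \<in> pE v (mm' d)" using e h(3) lO pE_mult0 by (auto simp: J_iff)
  show "\<exists>l t. en eps l = 1 \<and> esub t e1 \<in> pE v (mm d) \<and> m22 h = emul eps l t"
    using e h(1,3) by (intro exI[of _ l] exI[of _ "m22 j"]) (auto simp: J_iff)
qed

end

context LP begin

lemma theta_zmat_mult: "en eps l = 1 \<Longrightarrow> en eps l' = 1 \<Longrightarrow>
   theta (zmat (emul eps l l')) = theta (zmat l) * theta (zmat l')"
  using theta_mult Zgrp_zmat zmat_mult by (metis (mono_tags, lifting) image_eqI mem_Collect_eq)

lemma theta_mI: "theta mI = 1"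
proof -
  have "esub e1 e1 = (e0 :: 'f \<times> 'f)" by (rule prod_eqI') simp_all
  then have "zmat e1 \<in> Zgrp eps \<inter> Kn eps v 1" using zmat_Kn1[of e1] by simp
  then have "mI \<in> Zgrp eps \<inter> Kn eps v 1" by (simp add: zmat_e1)
  then show ?thesis using theta_triv by blast
qed

lemma H_wd: assumes d: "d \<ge> 1" and l: "en eps l = 1" "en eps l' = 1" and j: "j \<in> Jgrp eps v d" "j' \<in> Jgrp eps v d"
  and eq: "mmul eps (zmat l) (mmul eps (umat b) j) = mmul eps (zmat l') (mmul eps (umat b') j')"
  shows "theta (zmat l) * PsiJ eps varpi psi' d j = theta (zmat l') * PsiJ eps varpi psi' d j'"
proof -
  note jj = j(1)[unfolded J_iff] and jj' = j(2)[unfolded J_iff]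
  have E1: "emul eps l (m21 j) = emul eps l' (m21 j')" using arg_cong[OF eq, of m21] by simp
  have E2: "emul eps l (m22 j) = emul eps l' (m22 j')" using arg_cong[OF eq, of m22] by simp
  define r where "r = emul eps (econj l') l"
  have enr: "en eps r = 1" using l by (simp add: r_def en_mult)
  have rj22: "emul eps r (m22 j) = m22 j'"
    unfolding r_def emul_assoc E2 by (simp add: emul_assoc[symmetric] conj_self_1' l)
  have rj21: "emul eps r (m21 j) = m21 j'"
    unfolding r_def emul_assoc E1 by (simp add: emul_assoc[symmetric] conj_self_1' l)
  have u22: "eunit eps v (m22 j)" using one_plus_unit pE_mm_1[OF d] jj by blast
  have "esub r e1 = emul eps (esub (emul eps r (m22 j)) (m22 j)) (einv eps (m22 j))"
    using E_cancel[OF einv_mult[OF u22]] by simp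
  also have "\<dots> = emul eps (esub (esub (m22 j') e1) (esub (m22 j) e1)) (einv eps (m22 j))"
    by (simp add: rj22) (rule arg_cong[where f="\<lambda>x. emul eps x _"], rule prod_eqI', simp_all)
  finally have rm: "esub r e1 \<in> pE v (mm d)"
    using jj jj' einv_OE[OF u22] by (auto intro!: pE_mult0' pE_diff)
  have th: "theta (zmat r) = 1" using theta_triv zmat_Kn1[OF enr pE_mm_1[OF d rm]] by blast
  have "emul eps l' r = l" unfolding r_def by (simp add: emul_assoc[symmetric] conj_self_1 l)
  then have t: "theta (zmat l) = theta (zmat l')"
    using theta_zmat_mult[OF l(2) enr] th by simp
  have "emul eps r (m21 j) = eadd (m21 j) (emul eps (esub r e1) (m21 j))"
    by (rule prod_eqI') (simp_all add: algebra_simps)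
  then have "snd (m21 j') - snd (m21 j) = snd (emul eps (esub r e1) (m21 j))"
    using rj21 by simp
  moreover have "emul eps (esub r e1) (m21 j) \<in> pE v (int d + 1)"
    using pE_prod1[OF rm] jj by blast
  ultimately have "eps * inverse varpi ^ d * snd (m21 j') - eps * inverse varpi ^ d * snd (m21 j) \<in> pF v 1"
    using A_p1 by (simp add: pE_iff right_diff_distrib[symmetric])
  then have "PsiJ eps varpi psi' d j' = PsiJ eps varpi psi' d j"
    by (simp add: PsiJ_eq psi_cong)
  then show ?thesis using t by simp
qed

lemma PsiTheta_eq: assumes d: "d \<ge> 1" and "en eps l = 1" "b \<in> OF v" "j \<in> Jgrp eps v d"
  shows "PsiTheta eps v varpi psi' theta d (mmul eps (zmat l) (mmul eps (umat b) j)) =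
     theta (zmat l) * PsiJ eps varpi psi' d j"
proof -
  let ?h = "mmul eps (zmat l) (mmul eps (umat b) j)"
  let ?P = "\<lambda>c. \<exists>z u j. z \<in> Zgrp eps \<and> u \<in> Ugrp eps v \<and> j \<in> Jgrp eps v d \<and>
      ?h = mmul eps z (mmul eps u j) \<and> c = theta z * PsiJ eps varpi psi' d j"
  have "?P (theta (zmat l) * PsiJ eps varpi psi' d j)"
    using assms Zgrp_zmat Ugrp_umat by blast
  then have "?P (SOME c. ?P c)" by (rule someI)
  then obtain z u j' where w: "z \<in> Zgrp eps" "u \<in> Ugrp eps v" "j' \<in> Jgrp eps v d"
    "?h = mmul eps z (mmul eps u j')" "(SOME c. ?P c) = theta z * PsiJ eps varpi psi' d j'" by blast
  obtain l' where l': "en eps l' = 1" "z = zmat l'" using w(1) Zgrp_zmat by auto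
  obtain b' where b': "b' \<in> OF v" "u = umat b'" using w(2) Ugrp_umat[of eps v] by auto
  have "theta (zmat l) * PsiJ eps varpi psi' d j = theta (zmat l') * PsiJ eps varpi psi' d j'"
    by (rule H_wd[OF d assms(2) l'(1) assms(4) w(3)]) (use w(4) l' b' in simp)
  then show ?thesis unfolding PsiTheta_def using w(5) l' by simp
qed

lemma umat_cancel: "mmul eps (umat b) (mmul eps (umat (- b)) X) = X"
  by (simp add: mmul_assoc[symmetric] umat_mult umat_0)

lemma H_mult: assumes d: "d \<ge> 1" and h: "h1 \<in> ZUJ eps v d" "h2 \<in> ZUJ eps v d"
  shows "mmul eps h1 h2 \<in> ZUJ eps v d"
    "PsiTheta eps v varpi psi' theta d (mmul eps h1 h2) =
     PsiTheta eps v varpi psi' theta d h1 * PsiTheta eps v varpi psi' theta d h2"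
proof -
  obtain l1 b1 j1 where 1: "en eps l1 = 1" "b1 \<in> OF v" "j1 \<in> Jgrp eps v d"
    "h1 = mmul eps (zmat l1) (mmul eps (umat b1) j1)" using h(1) H_mem by blast
  obtain l2 b2 j2 where 2: "en eps l2 = 1" "b2 \<in> OF v" "j2 \<in> Jgrp eps v d"
    "h2 = mmul eps (zmat l2) (mmul eps (umat b2) j2)" using h(2) H_mem by blast
  define j1' where "j1' = mmul eps (mmul eps (umat (- b2)) j1) (umat b2)"
  have j1': "j1' \<in> Jgrp eps v d" "m21 j1' = m21 j1" using J_conjU[OF 1(3) 2(2)] by (simp_all add: j1'_def)
  have jj: "mmul eps j1' j2 \<in> Jgrp eps v d" using J_mult[OF d j1'(1) 2(3)] .
  have el: "en eps (emul eps l1 l2) = 1" using 1 2 by (simp add: en_mult)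
  have bb: "b1 + b2 \<in> OF v" using 1 2 OF_add by blast
  have zc: "mmul eps (zmat l) (mmul eps g Y) = mmul eps g (mmul eps (zmat l) Y)" for l g Y
    by (metis mmul_assoc zmat_comm)
  have "mmul eps h1 h2 = mmul eps (zmat l1) (mmul eps (umat b1) (mmul eps j1 (mmul eps (zmat l2) (mmul eps (umat b2) j2))))"
    by (simp add: 1(4) 2(4) mmul_assoc)
  also have "\<dots> = mmul eps (zmat l1) (mmul eps (zmat l2) (mmul eps (umat b1) (mmul eps j1 (mmul eps (umat b2) j2))))"
    by (simp only: zc[of l2 j1, symmetric] zc[of l2 "umat b1", symmetric])
  also have "\<dots> = mmul eps (zmat (emul eps l1 l2)) (mmul eps (umat (b1 + b2)) (mmul eps j1' j2))"
  proof -
    have "umat (b1 + b2) = mmul eps (umat b1) (umat b2)" by (simp add: umat_mult)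
    moreover have "zmat (emul eps l1 l2) = mmul eps (zmat l1) (zmat l2)" by (simp add: zmat_mult)
    ultimately show ?thesis by (simp add: mmul_assoc j1'_def umat_cancel)
  qed
  finally have eq: "mmul eps h1 h2 = mmul eps (zmat (emul eps l1 l2)) (mmul eps (umat (b1 + b2)) (mmul eps j1' j2))" .
  show "mmul eps h1 h2 \<in> ZUJ eps v d" unfolding H_mem using eq el bb jj by blast
  have "PsiJ eps varpi psi' d j1' = PsiJ eps varpi psi' d j1" by (simp add: PsiJ_eq j1'(2))
  show "PsiTheta eps v varpi psi' theta d (mmul eps h1 h2) =
     PsiTheta eps v varpi psi' theta d h1 * PsiTheta eps v varpi psi' theta d h2"
  proof -
    have p1: "PsiTheta eps v varpi psi' theta d h1 = theta (zmat l1) * PsiJ eps varpi psi' d j1"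
      using PsiTheta_eq[OF d 1(1-3)] 1(4) by simp
    have p2: "PsiTheta eps v varpi psi' theta d h2 = theta (zmat l2) * PsiJ eps varpi psi' d j2"
      using PsiTheta_eq[OF d 2(1-3)] 2(4) by simp
    have p12: "PsiTheta eps v varpi psi' theta d (mmul eps h1 h2) =
       theta (zmat (emul eps l1 l2)) * PsiJ eps varpi psi' d (mmul eps j1' j2)"
      using PsiTheta_eq[OF d el bb jj] eq by simp
    show ?thesis unfolding p1 p2 p12 using PsiJ_mult[OF d j1'(1) 2(3)] theta_zmat_mult[OF 1(1) 2(1)]
      \<open>PsiJ eps varpi psi' d j1' = PsiJ eps varpi psi' d j1\<close> by (simp add: mult_ac)
  qed
qed

lemma J_H: assumes d: "d \<ge> 1" and j: "j \<in> Jgrp eps v d"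
  shows "j \<in> ZUJ eps v d" "PsiTheta eps v varpi psi' theta d j = PsiJ eps varpi psi' d j"
proof -
  have eq: "j = mmul eps (zmat e1) (mmul eps (umat 0) j)" by (simp add: zmat_e1 umat_0)
  show "j \<in> ZUJ eps v d" unfolding H_mem using j eq by (intro exI[of _ e1] exI[of _ 0] exI[of _ j]) simp
  show "PsiTheta eps v varpi psi' theta d j = PsiJ eps varpi psi' d j"
    using PsiTheta_eq[OF d _ _ j, of e1 0] eq theta_mI by (simp add: zmat_e1)
qed

end

definition lmat :: "'f::field \<times> 'f \<Rightarrow> ('f \<times> 'f) m2" where "lmat c = M2 e1 e0 c e1"
lemma lmat_sel[simp]: "m11 (lmat c) = e1" "m12 (lmat c) = e0" "m21 (lmat c) = c" "m22 (lmat c) = e1"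
  by (simp_all add: lmat_def)

context LF begin

lemma G_rels: assumes "g \<in> Ggrp eps"
  shows "fst (m11 g) * fst (m21 g) - eps * snd (m11 g) * snd (m21 g) = 0"
    "fst (m12 g) * fst (m22 g) - eps * snd (m12 g) * snd (m22 g) = 0"
    "fst (m11 g) * fst (m22 g) - eps * snd (m11 g) * snd (m22 g) + fst (m21 g) * fst (m12 g) - eps * snd (m21 g) * snd (m12 g) = 1"
    "fst (m11 g) * snd (m22 g) - snd (m11 g) * fst (m22 g) + fst (m21 g) * snd (m12 g) - snd (m21 g) * fst (m12 g) = 0"
    "fst (m21 g) * fst (m22 g) - eps * snd (m21 g) * snd (m22 g) = 0"
proof -
  obtain a1 a2 b1 b2 c1 c2 d1 d2 where gg: "g = M2 (a1,a2) (b1,b2) (c1,c2) (d1,d2)"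
    by (metis m2.exhaust prod.exhaust)
  have r: "a1*c1 - eps*a2*c2 = 0" "b1*d1 - eps*b2*d2 = 0"
   "a1*d1 - eps*a2*d2 + c1*b1 - eps*c2*b2 = 1" "a1*d2 - a2*d1 + c1*b2 - c2*b1 = 0"
    using assms G_F unfolding gg by blast+
  have "c1*d1 - eps*c2*d2 = 0" using r by algebra
  then show "fst (m11 g) * fst (m21 g) - eps * snd (m11 g) * snd (m21 g) = 0"
    "fst (m12 g) * fst (m22 g) - eps * snd (m12 g) * snd (m22 g) = 0"
    "fst (m11 g) * fst (m22 g) - eps * snd (m11 g) * snd (m22 g) + fst (m21 g) * fst (m12 g) - eps * snd (m21 g) * snd (m12 g) = 1"
    "fst (m11 g) * snd (m22 g) - snd (m11 g) * fst (m22 g) + fst (m21 g) * snd (m12 g) - snd (m21 g) * fst (m12 g) = 0"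
    "fst (m21 g) * fst (m22 g) - eps * snd (m21 g) * snd (m22 g) = 0"
    using r unfolding gg by simp_all
qed

lemma fst_ratio0: assumes "fst b * fst t - eps * snd b * snd t = 0"
  shows "fst (emul eps b (einv eps t)) = 0"
proof -
  have "fst (emul eps b (einv eps t)) = (fst b * fst t - eps * snd b * snd t) / en eps t"
    by (simp add: diff_divide_distrib add_divide_distrib)
  then show ?thesis using assms by simp
qed

lemma H_char: assumes d: "d \<ge> 1" and g: "g \<in> Kgrp eps v" "m21 g \<in> pE v (mm' d)"
  and l: "en eps l = 1" and t: "esub t e1 \<in> pE v (mm d)" "m22 g = emul eps l t"
  shows "g \<in> ZUJ eps v d"
proof -
  define g' where "g' = mmul eps (zmat (econj l)) g"
  have lc: "en eps (econj l) = 1" using l by simp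
  have g'K: "g' \<in> Kgrp eps v" unfolding g'_def using K_mult[OF zmat_K[OF lc] g(1)] .
  have lO: "econj l \<in> OE v" using en_eq1_OE[OF lc] .
  have g'21: "m21 g' \<in> pE v (mm' d)" using pE_mult0[OF lO g(2)] by (simp add: g'_def)
  have g'22: "m22 g' = t" unfolding g'_def using t(2) by (simp add: emul_assoc[symmetric] conj_self_1' l)
  have tu: "eunit eps v t" using one_plus_unit pE_mm_1[OF d t(1)] by blast
  define x where "x = emul eps (m12 g') (einv eps t)"
  have xO: "x \<in> OE v" unfolding x_def using g'K einv_OE[OF tu] OE_mult by (auto simp: K_iff ments_def)
  have fx: "fst x = 0" unfolding x_def using G_rels(2)[OF K_G[OF g'K]] g'22 by (intro fst_ratio0) simp
  define bb where "bb = snd x"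
  have x: "x = (0, bb)" using fx by (simp add: bb_def prod_eq_iff)
  have bbO: "bb \<in> OF v" using xO by (simp add: bb_def OE_iff)
  define j where "j = mmul eps (umat (- bb)) g'"
  have jG: "j \<in> Ggrp eps" unfolding j_def using G_mult[OF umat_G K_G[OF g'K]] .
  have "emul eps x t = m12 g'" unfolding x_def by (simp add: emul_assoc einv_mult'[OF tu])
  then have j12: "m12 j = e0" unfolding j_def using x g'22 by (auto simp: prod_eq_iff)
  have j22: "m22 j = t" unfolding j_def using g'22 by simp
  have j21: "m21 j = m21 g'" unfolding j_def by simp
  have r3: "emul eps (econj (m11 j)) t = e1"
    using G_rels(3,4)[OF jG] j12 j22 by (intro prod_eqI') (simp_all add: algebra_simps)
  have "econj (m11 j) = emul eps (emul eps (econj (m11 j)) t) (einv eps t)"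
    by (simp add: emul_assoc einv_mult[OF tu])
  then have cj: "econj (m11 j) = einv eps t" using r3 by simp
  have "esub (einv eps t) e1 = emul eps (esub (emul eps (einv eps t) t) t) (einv eps t)"
    using E_cancel[OF einv_mult[OF tu]] by simp
  also have "\<dots> = emul eps (esub e1 t) (einv eps t)" by (simp add: einv_mult'[OF tu])
  finally have "esub (einv eps t) e1 \<in> pE v (mm d)"
  proof -
    assume e: "esub (einv eps t) e1 = emul eps (esub e1 t) (einv eps t)"
    have "esub e1 t = esub e0 (esub t e1)" by (rule prod_eqI') simp_all
    then have "esub e1 t \<in> pE v (mm d)" using pE_diff[OF pE_0 t(1)] by simp
    then show ?thesis unfolding e using einv_OE[OF tu] pE_mult0' by blast
  qed
  moreover have "esub (m11 j) e1 = econj (esub (einv eps t) e1)"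
    using arg_cong[OF cj, of econj] by (simp add: prod_eq_iff)
  ultimately have j11: "esub (m11 j) e1 \<in> pE v (mm d)" by simp
  have jJ: "j \<in> Jgrp eps v d" unfolding J_iff using jG j11 j12 j22 j21 g'21 t(1) by simp
  have "mmul eps (zmat l) (mmul eps (umat bb) j) = mmul eps (zmat l) g'"
    unfolding j_def by (simp add: mmul_assoc[symmetric] umat_mult umat_0)
  also have "\<dots> = g" unfolding g'_def
    by (simp add: mmul_assoc[symmetric] zmat_mult conj_self_1 l zmat_e1)
  finally show ?thesis unfolding H_mem using l bbO jJ by metis
qed

lemma lmat_J: assumes d: "d \<ge> 1" and c: "c \<in> pE v (int d)" and c1: "fst c = 0"
  shows "lmat c \<in> Jgrp eps v d"
proof -
  obtain c2 where cc: "c = (0, c2)" using c1 by (metis prod.collapse)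
  have G: "lmat c \<in> Ggrp eps" unfolding lmat_def cc e1_def e0_def
    by (simp add: G_F mdet_def prod_eq_iff)
  have "int d \<ge> mm' d" by (simp add: mm'_def) (use d in linarith)
  then have "c \<in> pE v (mm' d)" using pE_mono c by blast
  moreover have "esub e1 e1 = (e0 :: 'f \<times> 'f)" by (rule prod_eqI') simp_all
  ultimately show ?thesis using G by (simp add: J_iff)
qed

lemma lmat_Kn: assumes "c \<in> pE v (int n)" "fst c = 0" shows "lmat c \<in> Kn eps v n"
proof -
  obtain c2 where cc: "c = (0, c2)" using assms(2) by (metis prod.collapse)
  have G: "lmat c \<in> Ggrp eps" unfolding lmat_def cc e1_def e0_def
    by (simp add: G_F mdet_def prod_eq_iff)
  have "esub e1 e1 = (e0 :: 'f \<times> 'f)" by (rule prod_eqI') simp_all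
  then show ?thesis using G assms OE_pE[of "int n"]
    by (simp add: Kn_iff K_iff ments_def)
qed

lemma Kd1_J: assumes d: "d \<ge> 1" and g: "g \<in> Kn eps v (d + 1)" shows "g \<in> Jgrp eps v d"
proof -
  have a: "int (d + 1) \<ge> mm d" "int (d + 1) \<ge> mm' d" by (simp_all add: mm_def mm'_def)
  have "esub (m11 g) e1 \<in> pE v (int (d+1))" "esub (m22 g) e1 \<in> pE v (int (d+1))"
    "esub (m12 g) e0 \<in> pE v (int (d+1))" "esub (m21 g) e0 \<in> pE v (int (d+1))"
    using g by (simp_all add: Kn_iff ments_def)
  moreover have "esub z e0 = z" for z :: "'f \<times> 'f" by simp
  ultimately show ?thesis using g a pE_mono[of "mm d" "int (d+1)"] pE_mono[of "mm' d" "int (d+1)"]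
    by (auto simp: J_iff Kn_iff K_iff)
qed

end

context LP begin

lemma Kd1_chi: assumes d: "d \<ge> 1" and g: "g \<in> Kn eps v (d + 1)"
  shows "g \<in> ZUJ eps v d" "PsiTheta eps v varpi psi' theta d g = 1"
proof -
  have j: "g \<in> Jgrp eps v d" using Kd1_J[OF d g] .
  show "g \<in> ZUJ eps v d" using J_H[OF d j] by simp
  have "m21 g \<in> pE v (int d + 1)" using g by (simp add: Kn_iff ments_def add.commute)
  then have "eps * inverse varpi ^ d * snd (m21 g) \<in> pF v 1" using A_p1 by (simp add: pE_iff)
  then have "PsiJ eps varpi psi' d g = 1" using psi_triv by (simp add: PsiJ_eq)
  then show "PsiTheta eps v varpi psi' theta d g = 1" using J_H[OF d j] by simp
qed

lemma Sd_zero: "f \<in> Sd eps v varpi psi' theta d \<Longrightarrow> k \<notin> Kgrp eps v \<Longrightarrow> f k = 0"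
  by (simp add: Sd_def IndSpace_def)
lemma Sd_eq: "f \<in> Sd eps v varpi psi' theta d \<Longrightarrow> h \<in> ZUJ eps v d \<Longrightarrow> k \<in> Kgrp eps v \<Longrightarrow>
   f (mmul eps h k) = PsiTheta eps v varpi psi' theta d h * f k"
  by (simp add: Sd_def IndSpace_def)

lemma Sd_fixed: assumes d: "d \<ge> 1" "d + 1 \<le> n" and f: "f \<in> Sd eps v varpi psi' theta d"
  and k: "k \<in> Kgrp eps v" and g: "g \<in> Kn eps v n"
  shows "f (mmul eps k g) = f k"
proof -
  define h where "h = mmul eps (mmul eps k g) (minv k)"
  have "h \<in> Kn eps v n" unfolding h_def
    using Kn_normal[OF k K_minv[OF k] minv_G(2)[OF K_G[OF k]] g] .
  then have h: "h \<in> Kn eps v (d + 1)" using Kn_mono d(2) by blast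
  have "mmul eps h k = mmul eps k g" unfolding h_def
    by (simp add: mmul_assoc minv_G(1)[OF K_G[OF k]])
  then show ?thesis using Sd_eq[OF f Kd1_chi(1)[OF d(1) h] k] Kd1_chi(2)[OF d(1) h] by simp
qed

lemma Sd_vanish: assumes d: "d \<ge> 1" "n \<le> d" and f: "f \<in> Sd eps v varpi psi' theta d"
  and fx: "\<forall>k\<in>Kgrp eps v. \<forall>g\<in>Kn eps v n. f (mmul eps k g) = f k"
  shows "f k = 0"
proof (cases "k \<in> Kgrp eps v")
  case False then show ?thesis using Sd_zero[OF f] by simp
next
  case k: True
  obtain x where x: "x \<in> OF v" "psi' x \<noteq> 1" using psi_nontriv by blast
  define c where "c = ((0::'f), varpi ^ d * x / eps)"
  have cp: "c \<in> pE v (int d)" unfolding c_def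
    using pF_div_unit[OF pF_mult0'[OF varpi_pow_p x(1)] eps1 eps2] by (simp add: pE_iff)
  have cn: "c \<in> pE v (int n)" using pE_mono[OF _ cp] d(2) by simp
  have hJ: "lmat c \<in> Jgrp eps v d" using lmat_J[OF d(1) cp] by (simp add: c_def)
  have hK: "lmat c \<in> Kn eps v n" using lmat_Kn[OF cn] by (simp add: c_def)
  have chi: "PsiTheta eps v varpi psi' theta d (lmat c) = psi' x"
  proof -
    have "eps * inverse varpi ^ d * (varpi ^ d * x / eps) = x"
      using eps1 unif1 by (simp add: field_simps)
    then show ?thesis using J_H(2)[OF d(1) hJ] by (simp add: PsiJ_eq c_def)
  qed
  define g where "g = mmul eps (mmul eps (minv k) (lmat c)) k"
  have gK: "g \<in> Kn eps v n" unfolding g_def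
    using Kn_normal[OF K_minv[OF k] k minv_G(1)[OF K_G[OF k]] hK] .
  have "mmul eps k g = mmul eps (lmat c) k" unfolding g_def
    by (simp add: mmul_assoc[symmetric] minv_G(2)[OF K_G[OF k]])
  then have "f (mmul eps (lmat c) k) = f k" using fx k gK by metis
  moreover have "f (mmul eps (lmat c) k) = psi' x * f k"
    using Sd_eq[OF f J_H(1)[OF d(1) hJ] k] chi by simp
  ultimately have "(psi' x - 1) * f k = 0" by (simp add: algebra_simps)
  then show ?thesis using x(2) by simp
qed

end

lemma card_image_kernel:
  assumes "\<forall>a\<in>A. \<forall>b\<in>A. f a = f b \<longleftrightarrow> k a = k b"
  shows "card (f ` A) = card (k ` A)"
proof -
  define phi where "phi y = k (inv_into A f y)" for y
  have pk: "phi (f a) = k a" if "a \<in> A" for a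
  proof -
    have "inv_into A f (f a) \<in> A" "f (inv_into A f (f a)) = f a"
      using that by (auto intro: inv_into_into f_inv_into_f)
    then show ?thesis using assms that unfolding phi_def by metis
  qed
  have "k ` A = phi ` (f ` A)" using pk by (auto simp: image_iff)
  moreover have "inj_on phi (f ` A)"
    using pk assms by (auto simp: inj_on_def)
  ultimately show ?thesis by (simp add: card_image)
qed

lemma image_pair_eq:
  assumes "\<forall>a\<in>A. \<forall>b\<in>A. \<exists>c\<in>A. g c = g a \<and> h c = h b"
  shows "(\<lambda>a. (g a, h a)) ` A = g ` A \<times> h ` A"
  using assms by (auto simp: image_iff) metis

definition cls :: "('f::field \<Rightarrow> int) \<Rightarrow> int \<Rightarrow> 'f \<Rightarrow> 'f set" where
  "cls v j x = {y \<in> OF v. y - x \<in> pF v j}"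
definition UF :: "('f::field \<Rightarrow> int) \<Rightarrow> 'f set" where
  "UF v = {x \<in> OF v. x \<notin> pF v 1}"

context LF begin

declare unif1[simp] eps1[simp]

lemma cls_eq: assumes "x \<in> OF v" "y \<in> OF v" shows "cls v j x = cls v j y \<longleftrightarrow> x - y \<in> pF v j"
proof
  assume "cls v j x = cls v j y"
  moreover have "x \<in> cls v j x" using assms by (simp add: cls_def)
  ultimately show "x - y \<in> pF v j" by (simp add: cls_def)
next
  assume a: "x - y \<in> pF v j"
  have "z - x \<in> pF v j \<longleftrightarrow> z - y \<in> pF v j" for z
  proof
    assume "z - x \<in> pF v j" then show "z - y \<in> pF v j" using pF_add[OF _ a] by fastforce
  next
    assume "z - y \<in> pF v j" then show "z - x \<in> pF v j" using pF_diff[OF _ a] by fastforce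
  qed
  then show "cls v j x = cls v j y" by (auto simp: cls_def)
qed

definition q where "q = residue_card v"

lemma cls1_eq: "(\<lambda>x. {y \<in> OF v. y - x \<in> pF v 1}) = cls v 1"
  by (auto simp: cls_def)

lemma C1_eq: "(\<lambda>x. {y \<in> OF v. y - x \<in> pF v 1}) ` OF v = cls v 1 ` OF v"
  by (simp add: cls_def)
lemma card_C1: "card (cls v 1 ` OF v) = q" and fin_C1: "finite (cls v 1 ` OF v)"
  using resfin unfolding q_def residue_card_def C1_eq by simp_all

lemma q_pos: "q \<ge> 1"
proof -
  have "cls v 1 ` OF v \<noteq> {}" using OF_0 by blast
  then have "card (cls v 1 ` OF v) > 0" using fin_C1 card_gt_0_iff by blast
  then show ?thesis using card_C1 by simp
qed

lemma varpi_div: "x \<in> pF v (a + int n) \<Longrightarrow> x / varpi ^ n \<in> pF v a"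
proof -
  assume h: "x \<in> pF v (a + int n)"
  have "x * inverse varpi ^ n \<in> pF v (a + int n - int n)" using p_mult_varpi[OF h] .
  then show ?thesis by (simp add: divide_inverse power_inverse)
qed

lemma varpi_mul: "x \<in> pF v a \<Longrightarrow> varpi ^ n * x \<in> pF v (int n + a)"
  using pF_mult[OF varpi_pow_p] by blast

lemma card_cls: "card (cls v (int n) ` OF v) = q ^ n"
proof (induction n)
  case 0
  have "cls v 0 x = OF v" if "x \<in> OF v" for x
    using that OF_diff by (auto simp: cls_def OF_def)
  then have "cls v (int 0) ` OF v = {OF v}" using OF_0 by (auto simp: image_iff) (metis OF_0)
  then show ?case by simp
next
  case (Suc n)
  define rep where "rep x = (SOME y. y \<in> cls v (int n) x)" for x
  have rep: "rep x \<in> OF v" "rep x - x \<in> pF v (int n)" if "x \<in> OF v" for x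
  proof -
    have "x \<in> cls v (int n) x" using that by (simp add: cls_def)
    then have "rep x \<in> cls v (int n) x" unfolding rep_def by (rule someI)
    then show "rep x \<in> OF v" "rep x - x \<in> pF v (int n)" by (auto simp: cls_def)
  qed
  have rep_eq: "rep x = rep y" if "cls v (int n) x = cls v (int n) y" for x y
    using that by (simp add: rep_def)
  define dg where "dg x = (x - rep x) / varpi ^ n" for x
  have dgO: "dg x \<in> OF v" if "x \<in> OF v" for x
  proof -
    have "x - rep x \<in> pF v (0 + int n)" using rep(2)[OF that] pF_minus by fastforce
    then show ?thesis unfolding dg_def using varpi_div by (simp add: OF_def)
  qed
  have vp: "varpi ^ n \<noteq> 0" using varpi_pow by simp
  have ker: "cls v (int (Suc n)) x = cls v (int (Suc n)) y \<longleftrightarrow>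
     (cls v (int n) x, cls v 1 (dg x)) = (cls v (int n) y, cls v 1 (dg y))"
    if xy: "x \<in> OF v" "y \<in> OF v" for x y
  proof -
    have "cls v (int (Suc n)) x = cls v (int (Suc n)) y \<longleftrightarrow> x - y \<in> pF v (1 + int n)"
      using cls_eq xy by simp
    also have "\<dots> \<longleftrightarrow> cls v (int n) x = cls v (int n) y \<and> cls v 1 (dg x) = cls v 1 (dg y)"
    proof
      assume a: "x - y \<in> pF v (1 + int n)"
      then have c: "cls v (int n) x = cls v (int n) y" using cls_eq xy pF_mono[of "int n" "1 + int n"] by simp
      then have "rep x = rep y" by (rule rep_eq)
      then have "dg x - dg y = (x - y) / varpi ^ n" by (simp add: dg_def diff_divide_distrib[symmetric])
      then have "dg x - dg y \<in> pF v 1" using varpi_div[OF a] by simp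
      then show "cls v (int n) x = cls v (int n) y \<and> cls v 1 (dg x) = cls v 1 (dg y)"
        using c cls_eq dgO xy by simp
    next
      assume a: "cls v (int n) x = cls v (int n) y \<and> cls v 1 (dg x) = cls v 1 (dg y)"
      then have "dg x - dg y \<in> pF v 1" using cls_eq dgO xy by simp
      moreover have "rep x = rep y" using a rep_eq by blast
      then have "dg x - dg y = (x - y) / varpi ^ n" by (simp add: dg_def diff_divide_distrib[symmetric])
      ultimately have "varpi ^ n * ((x - y) / varpi ^ n) \<in> pF v (int n + 1)" using varpi_mul by metis
      then show "x - y \<in> pF v (1 + int n)" using vp unif1 by (simp add: add.commute)
    qed
    finally show ?thesis by simp
  qed
  have indep: "\<exists>c\<in>OF v. cls v (int n) c = cls v (int n) a \<and> cls v 1 (dg c) = cls v 1 (dg b')"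
    if "a \<in> OF v" "b' \<in> OF v" for a b'
  proof -
    define c where "c = rep a + varpi ^ n * dg b'"
    have cO: "c \<in> OF v" unfolding c_def using rep(1)[OF that(1)] dgO[OF that(2)] OF_mult OF_pow OF_add OF_varpi by blast
    have "varpi ^ n * dg b' \<in> pF v (int n + 0)" using varpi_mul[of "dg b'" 0 n] dgO[OF that(2)] unfolding OF_def by blast
    then have "(rep a - a) + varpi ^ n * dg b' \<in> pF v (int n)" using pF_add[OF rep(2)[OF that(1)]] by simp
    then have "c - a \<in> pF v (int n)" unfolding c_def by (simp add: algebra_simps)
    then have cc: "cls v (int n) c = cls v (int n) a" using cls_eq cO that(1) by simp
    have "rep c = rep a" using rep_eq[OF cc] .
    then have "dg c = (c - rep a) / varpi ^ n" by (simp add: dg_def)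
    also have "c - rep a = varpi ^ n * dg b'" by (simp add: c_def)
    finally have "dg c = dg b'" using vp by simp
    then show ?thesis using cO cc by (intro bexI[of _ c]) simp_all
  qed
  have "card (cls v (int (Suc n)) ` OF v) = card ((\<lambda>x. (cls v (int n) x, cls v 1 (dg x))) ` OF v)"
    by (rule card_image_kernel) (use ker in blast)
  also have "(\<lambda>x. (cls v (int n) x, cls v 1 (dg x))) ` OF v = cls v (int n) ` OF v \<times> (\<lambda>x. cls v 1 (dg x)) ` OF v"
    by (rule image_pair_eq) (use indep in blast)
  also have "(\<lambda>x. cls v 1 (dg x)) ` OF v = cls v 1 ` OF v"
  proof
    show "(\<lambda>x. cls v 1 (dg x)) ` OF v \<subseteq> cls v 1 ` OF v" using dgO by auto
    show "cls v 1 ` OF v \<subseteq> (\<lambda>x. cls v 1 (dg x)) ` OF v"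
    proof
      fix z assume "z \<in> cls v 1 ` OF v"
      then obtain b' where b': "b' \<in> OF v" "z = cls v 1 b'" by auto
      define c where "c = rep 0 + varpi ^ n * b'"
      have cO: "c \<in> OF v" unfolding c_def using rep(1)[OF OF_0] b'(1) OF_mult OF_pow OF_add OF_varpi by blast
      have "varpi ^ n * b' \<in> pF v (int n + 0)" using varpi_mul[of b' 0 n] b'(1) unfolding OF_def by blast
      then have "(rep 0 - 0) + varpi ^ n * b' \<in> pF v (int n)" using pF_add[OF rep(2)[OF OF_0]] by simp
      then have "c - 0 \<in> pF v (int n)" unfolding c_def by (simp add: algebra_simps)
      then have cc: "cls v (int n) c = cls v (int n) 0" using cls_eq cO OF_0 by blast
      have "rep c = rep 0" using rep_eq[OF cc] .
      then have "dg c = (c - rep 0) / varpi ^ n" by (simp add: dg_def)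
      also have "c - rep 0 = varpi ^ n * b'" by (simp add: c_def)
      finally have "dg c = b'" using vp by simp
      then show "z \<in> (\<lambda>x. cls v 1 (dg x)) ` OF v" using cO b' by blast
    qed
  qed
  finally show ?case using Suc card_C1 by (simp add: card_cartesian_product)
qed

lemma fin_cls: "finite (cls v (int n) ` OF v)"
  using card_cls[of n] q_pos by (metis card.infinite not_one_le_zero one_le_power)

end

context LF begin

lemma pF1_OF: "x \<in> pF v 1 \<Longrightarrow> x \<in> OF v" using OF_pF[of 1] by simp

lemma card_cls_p: "card (cls v (int n + 1) ` pF v 1) = q ^ n"
proof -
  have ker: "\<forall>x\<in>pF v 1. \<forall>y\<in>pF v 1. cls v (int n + 1) x = cls v (int n + 1) y \<longleftrightarrow>
     cls v (int n) (x / varpi) = cls v (int n) (y / varpi)"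
  proof (intro ballI)
    fix x y assume xy: "x \<in> pF v 1" "y \<in> pF v 1"
    have o: "x / varpi \<in> OF v" "y / varpi \<in> OF v"
      using varpi_div[of x 0 1] varpi_div[of y 0 1] xy by (simp_all add: OF_def)
    have "x - y \<in> pF v (int n + 1) \<longleftrightarrow> (x - y) / varpi \<in> pF v (int n)"
    proof
      assume "x - y \<in> pF v (int n + 1)" then show "(x - y) / varpi \<in> pF v (int n)"
        using varpi_div[of "x - y" "int n" 1] by simp
    next
      assume "(x - y) / varpi \<in> pF v (int n)"
      then have "varpi ^ 1 * ((x - y) / varpi) \<in> pF v (int 1 + int n)" by (rule varpi_mul)
      then show "x - y \<in> pF v (int n + 1)" by (simp add: add.commute)
    qed
    then show "cls v (int n + 1) x = cls v (int n + 1) y \<longleftrightarrow>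
     cls v (int n) (x / varpi) = cls v (int n) (y / varpi)"
      using cls_eq[OF pF1_OF[OF xy(1)] pF1_OF[OF xy(2)]] cls_eq[OF o] by (simp add: diff_divide_distrib)
  qed
  have "(\<lambda>x. cls v (int n) (x / varpi)) ` pF v 1 = cls v (int n) ` OF v"
  proof
    show "(\<lambda>x. cls v (int n) (x / varpi)) ` pF v 1 \<subseteq> cls v (int n) ` OF v"
      using varpi_div[of _ 0 1] by (auto simp: OF_def)
    show "cls v (int n) ` OF v \<subseteq> (\<lambda>x. cls v (int n) (x / varpi)) ` pF v 1"
    proof
      fix c assume "c \<in> cls v (int n) ` OF v"
      then obtain z where z: "z \<in> OF v" "c = cls v (int n) z" by auto
      have "varpi ^ 1 * z \<in> pF v (int 1 + 0)" using varpi_mul[of z 0 1] z(1) by (simp add: OF_def)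
      then have "varpi * z \<in> pF v 1" by simp
      moreover have "varpi * z / varpi = z" by simp
      ultimately show "c \<in> (\<lambda>x. cls v (int n) (x / varpi)) ` pF v 1" using z(2) by (metis image_eqI)
    qed
  qed
  then show ?thesis using card_image_kernel[OF ker] card_cls by simp
qed

lemma UF_OF: "x \<in> UF v \<Longrightarrow> x \<in> OF v" by (simp add: UF_def)

lemma cls_split: assumes "j \<ge> 1"
  shows "cls v j ` OF v = cls v j ` UF v \<union> cls v j ` pF v 1"
    "cls v j ` UF v \<inter> cls v j ` pF v 1 = {}"
proof -
  show "cls v j ` OF v = cls v j ` UF v \<union> cls v j ` pF v 1"
    using pF1_OF by (auto simp: UF_def)
  show "cls v j ` UF v \<inter> cls v j ` pF v 1 = {}"
  proof (rule ccontr)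
    assume "cls v j ` UF v \<inter> cls v j ` pF v 1 \<noteq> {}"
    then obtain x y where xy: "x \<in> UF v" "y \<in> pF v 1" "cls v j x = cls v j y" by auto
    then have "x - y \<in> pF v j" using cls_eq UF_OF pF1_OF by blast
    then have "x - y \<in> pF v 1" using pF_mono assms by blast
    then have "(x - y) + y \<in> pF v 1" using pF_add xy(2) by blast
    then show False using xy(1) by (simp add: UF_def)
  qed
qed

lemma card_cls_U: "card (cls v (int n + 1) ` UF v) = q ^ (n + 1) - q ^ n"
proof -
  have j: "int n + 1 \<ge> 1" by simp
  have f: "finite (cls v (int n + 1) ` OF v)" using fin_cls[of "n+1"] by (simp add: add.commute)
  have "card (cls v (int n + 1) ` OF v) = card (cls v (int n + 1) ` UF v) + card (cls v (int n + 1) ` pF v 1)"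
    using cls_split[OF j] f by (simp add: card_Un_disjoint)
  moreover have "card (cls v (int n + 1) ` OF v) = q ^ (n + 1)" using card_cls[of "n+1"] by (simp add: add.commute)
  ultimately show ?thesis using card_cls_p by simp
qed

lemma fin_cls_U: "finite (cls v (int n) ` UF v)"
  by (rule finite_subset[OF _ fin_cls[of n]]) (auto simp: UF_def)
lemma fin_cls_p: "finite (cls v (int n) ` pF v 1)"
  by (rule finite_subset[OF _ fin_cls[of n]]) (auto intro: pF1_OF)

lemma prime_p: assumes "a \<in> OF v" "b \<in> OF v" "a * b \<in> pF v 1" shows "a \<in> pF v 1 \<or> b \<in> pF v 1"
proof (rule ccontr)
  assume "\<not> (a \<in> pF v 1 \<or> b \<in> pF v 1)"
  then have "a \<noteq> 0" "v a = 0" "b \<noteq> 0" "v b = 0" using OF_dich assms by blast+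
  then have "a * b \<noteq> 0" "v (a * b) = 0" by (auto simp: vmult)
  then show False using assms(3) unit_not_p by blast
qed

lemma two_unit_p: "x \<in> OF v \<Longrightarrow> 2 * x \<in> pF v 1 \<Longrightarrow> x \<in> pF v 1"
  using prime_p[of 2 x] two_ne v2 unit_not_p[of 2] by auto

lemma squares_count: "2 * card ((\<lambda>x. cls v 1 (x * x)) ` OF v) \<ge> q + 1"
proof -
  let ?P = "(\<lambda>x. {cls v 1 x, cls v 1 (- x)}) ` UF v"
  let ?SqU = "(\<lambda>x. cls v 1 (x * x)) ` UF v"
  have mU: "- x \<in> UF v" if "x \<in> UF v" for x using that by (simp add: UF_def OF_minus)
  have UP: "\<Union> ?P = cls v 1 ` UF v" using mU by auto
  have fP: "finite (\<Union> ?P)" unfolding UP using fin_cls_U[of 1] by simp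
  have fP': "finite ?P" using fP finite_UnionD by blast
  have ne: "cls v 1 x \<noteq> cls v 1 (- x)" if "x \<in> UF v" for x
  proof
    assume "cls v 1 x = cls v 1 (- x)"
    then have "x - (- x) \<in> pF v 1" using cls_eq UF_OF that mU by blast
    moreover have "x - (- x) = 2 * x" by simp
    ultimately have "2 * x \<in> pF v 1" by simp
    then have "x \<in> pF v 1" using two_unit_p[OF UF_OF[OF that]] by blast
    then show False using that unfolding UF_def by blast
  qed
  have c2: "\<forall>c\<in>?P. card c = 2" using ne by auto
  have clsm: "cls v 1 a = cls v 1 b \<Longrightarrow> cls v 1 (- a) = cls v 1 (- b)" if "a \<in> OF v" "b \<in> OF v" for a b
  proof -
    assume "cls v 1 a = cls v 1 b"
    then have "a - b \<in> pF v 1" using cls_eq that by blast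
    then have "(- a) - (- b) \<in> pF v 1" by (metis minus_diff_minus pF_minus_iff)
    then show ?thesis using cls_eq OF_minus that by blast
  qed
  have pair_eq: "{cls v 1 x, cls v 1 (- x)} = {cls v 1 y, cls v 1 (- y)} \<longleftrightarrow>
     cls v 1 x = cls v 1 y \<or> cls v 1 x = cls v 1 (- y)" if "x \<in> UF v" "y \<in> UF v" for x y
  proof -
    have o: "x \<in> OF v" "y \<in> OF v" "- x \<in> OF v" "- y \<in> OF v" using that mU UF_OF by blast+
    show ?thesis
    proof
      assume "{cls v 1 x, cls v 1 (- x)} = {cls v 1 y, cls v 1 (- y)}"
      then have "cls v 1 x \<in> {cls v 1 y, cls v 1 (- y)}" by blast
      then show "cls v 1 x = cls v 1 y \<or> cls v 1 x = cls v 1 (- y)" by simp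
    next
      assume "cls v 1 x = cls v 1 y \<or> cls v 1 x = cls v 1 (- y)"
      then show "{cls v 1 x, cls v 1 (- x)} = {cls v 1 y, cls v 1 (- y)}"
        using clsm[OF o(1) o(2)] clsm[OF o(1) o(4)] by auto
    qed
  qed
  have disj: "\<forall>c1\<in>?P. \<forall>c2\<in>?P. c1 \<noteq> c2 \<longrightarrow> c1 \<inter> c2 = {}"
  proof (intro ballI impI)
    fix c1 c2 assume "c1 \<in> ?P" "c2 \<in> ?P" "c1 \<noteq> c2"
    then obtain x y where xy: "x \<in> UF v" "y \<in> UF v" "c1 = {cls v 1 x, cls v 1 (- x)}" "c2 = {cls v 1 y, cls v 1 (- y)}"
      by auto
    have o: "x \<in> OF v" "y \<in> OF v" "- x \<in> OF v" "- y \<in> OF v" using xy mU UF_OF by blast+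
    have "\<not> (cls v 1 x = cls v 1 y \<or> cls v 1 x = cls v 1 (- y))" using pair_eq[OF xy(1,2)] xy \<open>c1 \<noteq> c2\<close> by simp
    moreover have "cls v 1 (- x) = cls v 1 y \<Longrightarrow> cls v 1 x = cls v 1 (- y)"
      using clsm[OF o(3) o(2)] by simp
    moreover have "cls v 1 (- x) = cls v 1 (- y) \<Longrightarrow> cls v 1 x = cls v 1 y"
      using clsm[OF o(3) o(4)] by simp
    ultimately show "c1 \<inter> c2 = {}" using xy by auto
  qed
  have c2': "\<And>c. c \<in> ?P \<Longrightarrow> card c = 2" by (rule c2[rule_format])
  have disj': "\<And>c1 c2. c1 \<in> ?P \<Longrightarrow> c2 \<in> ?P \<Longrightarrow> c1 \<noteq> c2 \<Longrightarrow> c1 \<inter> c2 = {}"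
    by (rule disj[rule_format])
  have "2 * card ?P = card (\<Union> ?P)" by (rule card_partition[OF fP' fP c2' disj'])
  also have "\<dots> = q - 1" unfolding UP using card_cls_U[of 0] by simp
  finally have P: "2 * card ?P = q - 1" .
  have "card ?P = card ?SqU"
  proof (rule card_image_kernel, intro ballI)
    fix x y assume xy: "x \<in> UF v" "y \<in> UF v"
    have o: "x \<in> OF v" "y \<in> OF v" "- x \<in> OF v" "- y \<in> OF v" using xy mU UF_OF by blast+
    have sq: "cls v 1 (x * x) = cls v 1 (y * y) \<longleftrightarrow> (x - y) * (x + y) \<in> pF v 1"
      using cls_eq OF_mult o by (simp add: algebra_simps)
    have "(x - y) * (x + y) \<in> pF v 1 \<longleftrightarrow> x - y \<in> pF v 1 \<or> x - (- y) \<in> pF v 1"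
    proof
      assume "(x - y) * (x + y) \<in> pF v 1"
      then show "x - y \<in> pF v 1 \<or> x - (- y) \<in> pF v 1" using prime_p OF_diff OF_add o by simp
    next
      assume "x - y \<in> pF v 1 \<or> x - (- y) \<in> pF v 1"
      then show "(x - y) * (x + y) \<in> pF v 1"
        using pF_mult0'[of "x - y" 1 "x + y"] pF_mult0[of "x - y" "x + y" 1] OF_diff OF_add o by auto
    qed
    then show "({cls v 1 x, cls v 1 (- x)} = {cls v 1 y, cls v 1 (- y)}) = (cls v 1 (x * x) = cls v 1 (y * y))"
      using pair_eq[OF xy] sq cls_eq o by simp
  qed
  then have SqU: "2 * card ?SqU = q - 1" using P by simp
  have sub: "insert (cls v 1 0) ?SqU \<subseteq> (\<lambda>x. cls v 1 (x * x)) ` OF v"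
    using UF_OF by (auto simp: image_iff) (metis OF_0 mult_zero_left)
  have nin: "cls v 1 0 \<notin> ?SqU"
  proof
    assume "cls v 1 0 \<in> ?SqU"
    then obtain x where x: "x \<in> UF v" "cls v 1 0 = cls v 1 (x * x)" by auto
    have xO: "x \<in> OF v" using UF_OF x(1) .
    then have "x * x \<in> OF v" using OF_mult by blast
    then have "0 - x * x \<in> pF v 1" using cls_eq[OF OF_0] x(2) by blast
    then have "x * x \<in> pF v 1" by simp
    then have "x \<in> pF v 1" using sq_p xO by blast
    then show False using x(1) unfolding UF_def by blast
  qed
  have fin: "finite ((\<lambda>x. cls v 1 (x * x)) ` OF v)"
    using fin_C1 by (rule finite_subset[rotated]) (auto intro: OF_mult)
  have "card (insert (cls v 1 0) ?SqU) \<le> card ((\<lambda>x. cls v 1 (x * x)) ` OF v)"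
    using card_mono[OF fin sub] .
  moreover have "card (insert (cls v 1 0) ?SqU) = card ?SqU + 1"
    using nin finite_subset[OF _ fin] sub by (simp add: card_insert_if)
  ultimately show ?thesis using SqU q_pos by linarith
qed

end

context LF begin

lemma eps_mult_p: "z \<in> OF v \<Longrightarrow> eps * z \<in> pF v 1 \<longleftrightarrow> z \<in> pF v 1"
  using prime_p[OF OF_eps, of z] eps_unit_not_p pF_mult0[OF OF_eps, of z 1] by blast

lemma NS1: assumes u: "u \<in> OF v" "u \<notin> pF v 1" shows "\<exists>a\<in>OE v. en eps a - u \<in> pF v 1"
proof -
  let ?Sq = "(\<lambda>x. cls v 1 (x * x)) ` OF v"
  let ?T = "(\<lambda>y. cls v 1 (u + eps * y * y)) ` OF v"
  have "card ?Sq = card ?T"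
  proof (rule card_image_kernel, intro ballI)
    fix x y assume xy: "x \<in> OF v" "y \<in> OF v"
    have o: "x * x \<in> OF v" "y * y \<in> OF v" "u + eps * x * x \<in> OF v" "u + eps * y * y \<in> OF v"
      using xy u by (auto intro!: OF_mult OF_add)
    have "(u + eps * x * x) - (u + eps * y * y) = eps * (x * x - y * y)" by (simp add: algebra_simps)
    then show "(cls v 1 (x * x) = cls v 1 (y * y)) = (cls v 1 (u + eps * x * x) = cls v 1 (u + eps * y * y))"
      using cls_eq[OF o(1,2)] cls_eq[OF o(3,4)] eps_mult_p[OF OF_diff[OF o(1,2)]] by simp
  qed
  have sub: "?Sq \<union> ?T \<subseteq> cls v 1 ` OF v"
    using u by (auto intro!: OF_mult OF_add)
  have fin: "finite (?Sq \<union> ?T)" using finite_subset[OF sub fin_C1] .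
  have "?Sq \<inter> ?T \<noteq> {}"
  proof
    assume e: "?Sq \<inter> ?T = {}"
    have "card (?Sq \<union> ?T) = card ?Sq + card ?T"
      using fin e by (simp add: card_Un_disjoint)
    moreover have "card (?Sq \<union> ?T) \<le> q" using card_mono[OF fin_C1 sub] card_C1 by simp
    ultimately show False using squares_count \<open>card ?Sq = card ?T\<close> by linarith
  qed
  then obtain x y where xy: "x \<in> OF v" "y \<in> OF v" "cls v 1 (x * x) = cls v 1 (u + eps * y * y)" by auto
  have o: "x * x \<in> OF v" "u + eps * y * y \<in> OF v"
    using xy u by (auto intro!: OF_mult OF_add)
  have "x * x - (u + eps * y * y) \<in> pF v 1" using cls_eq[OF o] xy(3) by blast
  moreover have "en eps (x, y) - u = x * x - (u + eps * y * y)" by (simp add: en_def)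
  moreover have "(x, y) \<in> OE v" using xy by (simp add: OE_iff)
  ultimately show ?thesis by metis
qed

lemma NS: assumes u: "u \<in> OF v" "u \<notin> pF v 1" shows "\<exists>a\<in>OE v. en eps a - u \<in> pF v (int n)"
proof (induction n)
  case 0 then show ?case using NS1[OF u] OF_pF[of 1] by (auto simp: OF_def)
next
  case (Suc n)
  show ?case
  proof (cases "n = 0")
    case True then show ?thesis using NS1[OF u] by simp
  next
    case False
    obtain a where a: "a \<in> OE v" "en eps a - u \<in> pF v (int n)" using Suc.IH by blast
    have uu: "u \<noteq> 0" "v u = 0" using OF_dich u by auto
    define t where "t = (en eps a - u) / u"
    have t: "t \<in> pF v (int n)" unfolding t_def using pF_div_unit[OF a(2) uu] .
    have tO: "t \<in> OF v" using OF_pF[OF _ t] by simp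
    have half: "inverse 2 \<in> OF v" using unit_inv[OF two_ne v2] .
    define s where "s = 1 - t * inverse 2"
    have sO: "s \<in> OF v" unfolding s_def using tO half OF_mult OF_diff OF_1 by blast
    define a' where "a' = (s * fst a, s * snd a)"
    have a'O: "a' \<in> OE v" using a(1) sO by (simp add: a'_def OE_iff OF_mult)
    have ena: "en eps a = u * (1 + t)" using uu by (simp add: t_def field_simps)
    have "en eps a' = s * s * en eps a" by (simp add: a'_def en_def algebra_simps)
    moreover have f4: "(4::'f) \<noteq> 0" using two_ne mult_eq_0_iff[of "2::'f" 2] by simp
    ultimately have "en eps a' - u = u * (t * t) * ((t - 3) * inverse 4)"
      using two_ne unfolding ena s_def by (simp add: field_simps)
    moreover have "t * t \<in> pF v (int n + int n)" using pF_mult[OF t t] .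
    moreover have "int n + int n \<ge> int (Suc n)" using False by simp
    moreover have "(t - 3) * inverse 4 \<in> OF v"
    proof -
      have "(4::'f) = 2 * 2" by simp
      then have "inverse (4::'f) = inverse 2 * inverse 2" by (simp add: mult_inverse_of_nat_commute)
      then show ?thesis using OF_mult[OF OF_diff[OF tO OF_numeral] OF_mult[OF half half]] by simp
    qed
    ultimately have "en eps a' - u \<in> pF v (int (Suc n))"
      using pF_mult0[OF u(1)] pF_mult0' pF_mono by metis
    then show ?thesis using a'O by blast
  qed
qed

end

lemma eadd_comm: "eadd x y = eadd y x" by (rule prod_eqI') (simp_all add: add.commute)

lemma cay_identA: fixes mu :: "'f::field \<times> 'f"
  assumes "emul eps w iw = e1" "emul eps (econj w) iwc = e1" "w = eadd e1 mu"
  shows "mu = emul eps (emul eps w iwc) (eadd e1 (emul eps (emb (en eps mu - 1)) iw))"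
proof -
  obtain m1 m2 where mu: "mu = (m1, m2)" by (cases mu)
  obtain i1 i2 where iw: "iw = (i1, i2)" by (cases iw)
  obtain j1 j2 where iwc: "iwc = (j1, j2)" by (cases iwc)
  have h: "(1 + m1) * i1 + eps * m2 * i2 = 1" "(1 + m1) * i2 + m2 * i1 = 0"
     "(1 + m1) * j1 - eps * m2 * j2 = 1" "(1 + m1) * j2 - m2 * j1 = 0"
    using assms unfolding mu iw iwc by (auto simp: prod_eq_iff)
  show ?thesis unfolding assms(3) mu iw iwc
    apply (rule prod_eqI') using h by (simp_all add: en_def) (algebra, algebra)
qed

lemma cay_identB: fixes mu :: "'f::field \<times> 'f"
  assumes "emul eps w iw = e1" "emul eps (econj w) iwc = e1" "w = esub e1 mu"
  shows "mu = emul eps (emul eps (esub e0 w) iwc) (eadd e1 (emul eps (emb (en eps mu - 1)) iw))"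
proof -
  obtain m1 m2 where mu: "mu = (m1, m2)" by (cases mu)
  obtain i1 i2 where iw: "iw = (i1, i2)" by (cases iw)
  obtain j1 j2 where iwc: "iwc = (j1, j2)" by (cases iwc)
  have h: "(1 - m1) * i1 - eps * m2 * i2 = 1" "(1 - m1) * i2 - m2 * i1 = 0"
     "(1 - m1) * j1 + eps * m2 * j2 = 1" "(1 - m1) * j2 + m2 * j1 = 0"
    using assms unfolding mu iw iwc by (auto simp: prod_eq_iff)
  show ?thesis unfolding assms(3) mu iw iwc
    apply (rule prod_eqI') using h by (simp_all add: en_def) (algebra, algebra)
qed

context LF begin

lemma en_einv: "z \<noteq> e0 \<Longrightarrow> en eps (einv eps z) = inverse (en eps z)"
  using en_mult[of eps z "einv eps z"] emul_einv[of z] en_zero_iff[of z]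
  by (simp add: field_simps)

lemma eunit_en1: "en eps l = 1 \<Longrightarrow> eunit eps v l"
  using en_eq1_OE by (simp add: eunit_def v1)

lemma einv_conj: "econj (einv eps z) = einv eps (econj z)"
  by (rule prod_eqI') simp_all

lemma CAY: assumes mu: "eunit eps v mu" and n: "en eps mu - 1 \<in> pF v n" "n \<ge> 1"
  shows "\<exists>l s. en eps l = 1 \<and> s \<in> pE v n \<and> mu = emul eps l (eadd e1 s)"
proof -
  have muO: "mu \<in> OE v" using mu eunit_OE by blast
  have N: "emb (en eps mu - 1) \<in> pE v n" using n(1) by simp
  show ?thesis
  proof (cases "eunit eps v (eadd e1 mu)")
    case True
    define w where "w = eadd e1 mu"
    have wu: "eunit eps v w" "eunit eps v (econj w)" using True eunit_conj by (auto simp: w_def)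
    define l where "l = emul eps w (einv eps (econj w))"
    define s where "s = emul eps (emb (en eps mu - 1)) (einv eps w)"
    have "en eps l = en eps w * inverse (en eps w)"
      unfolding l_def en_mult using en_einv[OF eunit_ne[OF wu(2)]] by simp
    then have l1: "en eps l = 1" using wu(1) by (simp add: eunit_def)
    have s: "s \<in> pE v n" unfolding s_def using pE_mult0'[OF N einv_OE[OF wu(1)]] .
    have "mu = emul eps l (eadd e1 s)" unfolding l_def s_def
      by (rule cay_identA[OF einv_mult[OF wu(1)] einv_mult[OF wu(2)]]) (simp add: w_def)
    then show ?thesis using l1 s by blast
  next
    case False
    have "eadd e1 mu \<in> OE v" using OE_add[OF OE_e1 muO] .
    then have p: "eadd e1 mu \<in> pE v 1" using E_dich False by blast
    define w where "w = esub e1 mu"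
    have "(4::'f) = 2 * 2" by simp
    then have "(4::'f) \<noteq> 0 \<and> v 4 = 0" using two_ne v2 vmult[of 2 2] mult_eq_0_iff[of "2::'f" 2] by simp
    then have e2: "eunit eps v (emb 2)" using two_ne v2 by (simp add: eunit_def en_def)
    have "w = eadd (emb 2) (esub e0 (eadd e1 mu))" unfolding w_def by (rule prod_eqI') simp_all
    then have wu0: "eunit eps v w" using eunit_add_p[OF e2 pE_diff[OF pE_0 p]] by simp
    have wu: "eunit eps v w" "eunit eps v (econj w)" using wu0 eunit_conj by auto
    define l where "l = emul eps (esub e0 w) (einv eps (econj w))"
    define s where "s = emul eps (emb (en eps mu - 1)) (einv eps w)"
    have "en eps (esub e0 w) = en eps w" by (simp add: en_def)
    then have "en eps l = en eps w * inverse (en eps w)"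
      unfolding l_def en_mult using en_einv[OF eunit_ne[OF wu(2)]] by simp
    then have l1: "en eps l = 1" using wu(1) by (simp add: eunit_def)
    have s: "s \<in> pE v n" unfolding s_def using pE_mult0'[OF N einv_OE[OF wu(1)]] .
    have "mu = emul eps l (eadd e1 s)" unfolding l_def s_def
      by (rule cay_identB[OF einv_mult[OF wu(1)] einv_mult[OF wu(2)]]) (simp add: w_def)
    then show ?thesis using l1 s by blast
  qed
qed

lemma EN1: assumes "x \<in> OE v" "e \<in> pE v n" "n \<ge> 0" shows "en eps (eadd x e) - en eps x \<in> pF v n"
proof -
  have "en eps (eadd x e) - en eps x =
     fst e * (2 * fst x + fst e) - eps * snd e * (2 * snd x + snd e)"
    by (simp add: en_def algebra_simps)
  moreover have "2 * fst x + fst e \<in> OF v" "2 * snd x + snd e \<in> OF v"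
    using assms OE_pE[OF assms(3) assms(2)] by (auto simp: OE_iff intro!: OF_add OF_mult)
  moreover have "fst e \<in> pF v n" "eps * snd e \<in> pF v n"
    using assms(2) pF_mult0[OF OF_eps] by (auto simp: pE_iff)
  ultimately show ?thesis using pF_mult0' pF_diff by metis
qed

lemma ratio_diff: fixes U U' W W' :: "'f \<times> 'f"
  assumes "emul eps U iU = e1" "emul eps U' iU' = e1"
  shows "esub (emul eps W' iU') (emul eps W iU) = emul eps (esub (emul eps W' U) (emul eps W U')) (emul eps iU' iU)"
proof -
  have "emul eps (esub (emul eps W' U) (emul eps W U')) (emul eps iU' iU) =
     esub (emul eps (emul eps W' iU') (emul eps U iU)) (emul eps (emul eps W iU) (emul eps U' iU'))"
    by (rule prod_eqI') (simp_all add: algebra_simps)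
  then show ?thesis using assms by simp
qed

end

context LF begin

lemma INV: assumes d: "d \<ge> 1" and h21: "h21 \<in> pE v (mm' d)" and l: "en eps l = 1"
  and t: "esub t e1 \<in> pE v (mm d)" and O: "A \<in> OE v" "B \<in> OE v" "U \<in> OE v" "W \<in> OE v"
  and U: "eunit eps v U"
  and U': "U' = eadd (emul eps h21 A) (emul eps (emul eps l t) U)"
  and W': "W' = eadd (emul eps h21 B) (emul eps (emul eps l t) W)"
  shows "eunit eps v U'" "en eps U' - en eps U \<in> pF v (mm d)"
    "snd (emul eps W' (einv eps U')) - snd (emul eps W (einv eps U)) \<in> pF v (mm' d)"
    "W' \<in> pE v 1 \<longleftrightarrow> W \<in> pE v 1"
proof -
  define s where "s = emul eps l t"
  have su: "eunit eps v s" unfolding s_def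
    using eunit_mult[OF eunit_en1[OF l] one_plus_unit[OF pE_mm_1[OF d t]]] .
  have sU: "eunit eps v (emul eps s U)" using eunit_mult[OF su U] .
  have hA: "emul eps h21 A \<in> pE v (mm' d)" using pE_mult0'[OF h21 O(1)] .
  have hB: "emul eps h21 B \<in> pE v (mm' d)" using pE_mult0'[OF h21 O(2)] .
  have U'e: "U' = eadd (emul eps s U) (emul eps h21 A)" unfolding U' s_def by (simp add: eadd_comm)
  show U'u: "eunit eps v U'" unfolding U'e using eunit_add_p[OF sU pE_mm'_1[OF hA]] .
  have mm'0: "mm' d \<ge> 0" "mm d \<ge> 0" by (simp_all add: mm'_def mm_def)
  have e1: "en eps U' - en eps (emul eps s U) \<in> pF v (mm d)"
    unfolding U'e using EN1[OF eunit_OE[OF sU] hA mm'0(1)] pF_mono[OF mm_le] by blast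
  have "eadd e1 (esub t e1) = t" by (rule prod_eqI') simp_all
  then have "en eps t - 1 \<in> pF v (mm d)" using EN1[OF OE_e1 t mm'0(2)] by simp
  then have "(en eps t - 1) * en eps U \<in> pF v (mm d)" using pF_mult0'[OF _ en_OE[OF O(3)]] by blast
  moreover have "en eps (emul eps s U) - en eps U = (en eps t - 1) * en eps U"
    unfolding s_def en_mult l by (simp add: algebra_simps)
  ultimately have e2: "en eps (emul eps s U) - en eps U \<in> pF v (mm d)" by simp
  have "en eps U' - en eps U = (en eps U' - en eps (emul eps s U)) + (en eps (emul eps s U) - en eps U)" by simp
  then show "en eps U' - en eps U \<in> pF v (mm d)" using pF_add[OF e1 e2] by simp
  have rd: "esub (emul eps W' (einv eps U')) (emul eps W (einv eps U)) =
     emul eps (esub (emul eps W' U) (emul eps W U')) (emul eps (einv eps U') (einv eps U))"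
    by (rule ratio_diff[OF einv_mult[OF U] einv_mult[OF U'u]])
  have "esub (emul eps W' U) (emul eps W U') = emul eps h21 (esub (emul eps B U) (emul eps W A))"
    unfolding U' W' by (rule prod_eqI') (simp_all add: algebra_simps)
  moreover have "esub (emul eps B U) (emul eps W A) \<in> OE v" using O by (intro OE_diff OE_mult)
  ultimately have "esub (emul eps W' U) (emul eps W U') \<in> pE v (mm' d)" using pE_mult0'[OF h21] by simp
  then have "esub (emul eps W' (einv eps U')) (emul eps W (einv eps U)) \<in> pE v (mm' d)"
    unfolding rd using pE_mult0' OE_mult einv_OE U U'u by blast
  then show "snd (emul eps W' (einv eps U')) - snd (emul eps W (einv eps U)) \<in> pF v (mm' d)"
    by (simp add: pE_iff)
  have sW: "W' = eadd (emul eps h21 B) (emul eps s W)" unfolding W' s_def ..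
  show "W' \<in> pE v 1 \<longleftrightarrow> W \<in> pE v 1"
  proof
    assume "W' \<in> pE v 1"
    then have "esub W' (emul eps h21 B) \<in> pE v 1" using pE_diff pE_mm'_1[OF hB] by blast
    moreover have "esub W' (emul eps h21 B) = emul eps s W" unfolding sW by (rule prod_eqI') simp_all
    ultimately show "W \<in> pE v 1" using eunit_mult_pE[OF su] by simp
  next
    assume "W \<in> pE v 1"
    then have "emul eps s W \<in> pE v 1" using pE_mult0 eunit_OE[OF su] by blast
    then show "W' \<in> pE v 1" unfolding sW using pE_add pE_mm'_1[OF hB] by blast
  qed
qed

lemma INJ: assumes d: "d \<ge> 1" and O: "A1 \<in> OE v" "B1 \<in> OE v" "W1 \<in> OE v" "W2 \<in> OE v"
  and U: "eunit eps v U1" "eunit eps v U2"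
  and f: "fst (emul eps W1 (einv eps U1)) = 0" "fst (emul eps W2 (einv eps U2)) = 0"
  and sq: "snd (emul eps W2 (einv eps U2)) - snd (emul eps W1 (einv eps U1)) \<in> pF v (mm' d)"
  and en: "en eps U2 - en eps U1 \<in> pF v (mm d)"
  and row: "eadd (emul eps U1 A1) (emul eps W1 B1) = e1"
  shows "eadd (emul eps W2 (econj U1)) (emul eps U2 (econj W1)) \<in> pE v (mm' d)"
    "\<exists>l t. en eps l = 1 \<and> esub t e1 \<in> pE v (mm d) \<and> eadd (emul eps U2 A1) (emul eps W2 B1) = emul eps l t"
proof -
  define q1 where "q1 = emul eps W1 (einv eps U1)"
  define q2 where "q2 = emul eps W2 (einv eps U2)"
  have W1: "W1 = emul eps q1 U1" unfolding q1_def by (simp add: emul_assoc einv_mult'[OF U(1)])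
  have W2: "W2 = emul eps q2 U2" unfolding q2_def by (simp add: emul_assoc einv_mult'[OF U(2)])
  define dl where "dl = esub q2 q1"
  have fq: "fst q1 = 0" "fst q2 = 0" using f unfolding q1_def q2_def by simp_all
  have sq': "snd q2 - snd q1 \<in> pF v (mm' d)" using sq unfolding q1_def q2_def .
  have dl: "dl \<in> pE v (mm' d)" using fq sq' by (simp add: dl_def pE_iff)
  have "eadd (emul eps W2 (econj U1)) (emul eps U2 (econj W1)) = emul eps (emul eps U2 (econj U1)) dl"
    unfolding W1 W2 dl_def using fq by (intro prod_eqI') (simp_all add: algebra_simps)
  then show "eadd (emul eps W2 (econj U1)) (emul eps U2 (econj W1)) \<in> pE v (mm' d)"
    using pE_mult0[OF _ dl] OE_mult eunit_OE U by simp
  have r: "emul eps U1 (eadd A1 (emul eps q1 B1)) = e1" using row unfolding W1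
    by (simp add: prod_eq_iff algebra_simps)
  have AB: "eadd A1 (emul eps q1 B1) = einv eps U1"
  proof -
    have "eadd A1 (emul eps q1 B1) = emul eps (einv eps U1) (emul eps U1 (eadd A1 (emul eps q1 B1)))"
      by (simp add: emul_assoc[symmetric] einv_mult'[OF U(1)])
    then show ?thesis using r by simp
  qed
  have G22: "eadd (emul eps U2 A1) (emul eps W2 B1) = eadd (emul eps U2 (eadd A1 (emul eps q1 B1))) (emul eps U2 (emul eps dl B1))"
    unfolding W2 dl_def by (rule prod_eqI') (simp_all add: algebra_simps)
  define mu where "mu = emul eps U2 (einv eps U1)"
  have muu: "eunit eps v mu" unfolding mu_def using eunit_mult[OF U(2) eunit_einv[OF U(1)]] .
  have u1: "en eps U1 \<noteq> 0" "v (en eps U1) = 0" using U(1) by (auto simp: eunit_def)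
  have "en eps mu - 1 = (en eps U2 - en eps U1) / en eps U1"
    unfolding mu_def en_mult en_einv[OF eunit_ne[OF U(1)]] using u1 by (simp add: field_simps)
  then have "en eps mu - 1 \<in> pF v (mm d)" using pF_div_unit[OF en u1] by simp
  then obtain l s where ls: "en eps l = 1" "s \<in> pE v (mm d)" "mu = emul eps l (eadd e1 s)"
    using CAY[OF muu] mm_ge1[OF d] by blast
  define e where "e = emul eps U2 (emul eps dl B1)"
  have e: "e \<in> pE v (mm' d)" unfolding e_def
    using pE_mult0[OF eunit_OE[OF U(2)] pE_mult0'[OF dl O(2)]] .
  define t where "t = eadd (eadd e1 s) (emul eps (econj l) e)"
  have lO: "econj l \<in> OE v" using en_eq1_OE[of "econj l"] ls(1) by simp
  have "esub t e1 = eadd s (emul eps (econj l) e)" unfolding t_def by (rule prod_eqI') simp_all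
  then have t: "esub t e1 \<in> pE v (mm d)" using pE_add[OF ls(2) pE_mult0[OF lO pE_mm'_to_mm[OF e]]] by simp
  have "eadd (emul eps U2 A1) (emul eps W2 B1) = eadd mu e"
    unfolding G22 AB mu_def e_def ..
  also have "\<dots> = emul eps l t"
  proof -
    have "emul eps l t = eadd (emul eps l (eadd e1 s)) (emul eps (emul eps l (econj l)) e)"
      unfolding t_def by (rule prod_eqI') (simp_all add: algebra_simps)
    then show ?thesis using ls(3) conj_self_1[OF ls(1)] by simp
  qed
  finally show "\<exists>l t. en eps l = 1 \<and> esub t e1 \<in> pE v (mm d) \<and> eadd (emul eps U2 A1) (emul eps W2 B1) = emul eps l t"
    using ls(1) t by blast
qed

end

definition Phi :: "'f::field \<Rightarrow> ('f \<Rightarrow> int) \<Rightarrow> nat \<Rightarrow> ('f \<times> 'f) m2 \<Rightarrow> bool \<times> 'f set \<times> 'f set" where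
  "Phi eps v d k = (if m22 k \<notin> pE v 1
     then (True, cls v (mm d) (en eps (m22 k)), cls v (mm' d) (snd (emul eps (m21 k) (einv eps (m22 k)))))
     else (False, cls v (mm d) (en eps (m21 k)), cls v (mm' d) (snd (emul eps (m22 k) (einv eps (m21 k))))))"

definition Sset :: "('f::field \<Rightarrow> int) \<Rightarrow> nat \<Rightarrow> (bool \<times> 'f set \<times> 'f set) set" where
  "Sset v d = ({True} \<times> cls v (mm d) ` UF v \<times> cls v (mm' d) ` OF v) \<union>
              ({False} \<times> cls v (mm d) ` UF v \<times> cls v (mm' d) ` pF v 1)"

definition dmat :: "'f::field \<Rightarrow> 'f \<times> 'f \<Rightarrow> ('f \<times> 'f) m2" where
  "dmat eps a = M2 (econj (einv eps a)) e0 e0 a"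
definition amat :: "'f::field \<Rightarrow> 'f \<times> 'f \<Rightarrow> ('f \<times> 'f) m2" where
  "amat eps a = M2 e0 (econj (einv eps a)) a e0"

context LF begin

lemma K_ents: "k \<in> Kgrp eps v \<Longrightarrow> m11 k \<in> OE v \<and> m12 k \<in> OE v \<and> m21 k \<in> OE v \<and> m22 k \<in> OE v"
  by (simp add: K_iff ments_def)

lemma K_dich: assumes k: "k \<in> Kgrp eps v" shows "m21 k \<notin> pE v 1 \<or> m22 k \<notin> pE v 1"
proof (rule ccontr)
  assume "\<not> (m21 k \<notin> pE v 1 \<or> m22 k \<notin> pE v 1)"
  then have p: "m21 k \<in> pE v 1" "m22 k \<in> pE v 1" by auto
  have O: "m11 k \<in> OE v" "m12 k \<in> OE v" using K_ents[OF k] by auto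
  have "eadd (emul eps (econj (m11 k)) (m22 k)) (emul eps (econj (m21 k)) (m12 k)) \<in> pE v 1"
    using p O by (intro pE_add pE_mult0 pE_mult0') auto
  then have "fst (eadd (emul eps (econj (m11 k)) (m22 k)) (emul eps (econj (m21 k)) (m12 k))) \<in> pF v 1"
    by (simp add: pE_iff)
  moreover have "fst (eadd (emul eps (econj (m11 k)) (m22 k)) (emul eps (econj (m21 k)) (m12 k))) = 1"
    using G_rels(3)[OF K_G[OF k]] by (simp add: algebra_simps)
  ultimately show False using not_1_p by simp
qed

lemma eunit_en_UF: "eunit eps v z \<Longrightarrow> en eps z \<in> UF v"
  using en_OE unit_not_p by (auto simp: UF_def eunit_def)

lemma row_ratio: assumes k: "k \<in> Kgrp eps v"
  shows "fst (emul eps (m21 k) (einv eps (m22 k))) = 0" "fst (emul eps (m22 k) (einv eps (m21 k))) = 0"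
  using G_rels(5)[OF K_G[OF k]] by (intro fst_ratio0; simp add: algebra_simps)+

lemma Phi_S: assumes k: "k \<in> Kgrp eps v" shows "Phi eps v d k \<in> Sset v d"
proof (cases "m22 k \<in> pE v 1")
  case False
  have u: "eunit eps v (m22 k)" using eunit_iff K_ents[OF k] False by blast
  have "snd (emul eps (m21 k) (einv eps (m22 k))) \<in> OF v"
    using OE_mult[of "m21 k" "einv eps (m22 k)"] K_ents[OF k] einv_OE[OF u] by (simp add: OE_iff)
  then show ?thesis using False eunit_en_UF[OF u] by (simp add: Phi_def Sset_def)
next
  case True
  then have "m21 k \<notin> pE v 1" using K_dich[OF k] by blast
  then have u: "eunit eps v (m21 k)" using eunit_iff K_ents[OF k] by blast
  have "snd (emul eps (m22 k) (einv eps (m21 k))) \<in> pF v 1"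
    using pE_mult0'[OF True einv_OE[OF u]] by (simp add: pE_iff)
  then show ?thesis using True eunit_en_UF[OF u] by (simp add: Phi_def Sset_def)
qed

lemma snd_ratio_OF: "a \<in> OE v \<Longrightarrow> eunit eps v u \<Longrightarrow> snd (emul eps a (einv eps u)) \<in> OF v"
  using OE_mult[OF _ einv_OE] OE_iff by blast

lemma Phi_inv: assumes d: "d \<ge> 1" and h: "h \<in> ZUJ eps v d" and k: "k \<in> Kgrp eps v"
  shows "Phi eps v d (mmul eps h k) = Phi eps v d k"
proof -
  have h21: "m21 h \<in> pE v (mm' d)" using H_entries(1)[OF h] .
  obtain l t where lt: "en eps l = 1" "esub t e1 \<in> pE v (mm d)" "m22 h = emul eps l t"
    using H_entries(2)[OF h] by blast
  note O = K_ents[OF k]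
  have O11: "m11 k \<in> OE v" and O12: "m12 k \<in> OE v" and O21: "m21 k \<in> OE v" and O22: "m22 k \<in> OE v"
    using O by auto
  have e21: "m21 (mmul eps h k) = eadd (emul eps (m21 h) (m11 k)) (emul eps (emul eps l t) (m21 k))"
    using lt(3) by simp
  have e22: "m22 (mmul eps h k) = eadd (emul eps (m21 h) (m12 k)) (emul eps (emul eps l t) (m22 k))"
    using lt(3) by simp
  have hkK: "mmul eps h k \<in> Kgrp eps v" using K_mult[OF H_K[OF h] k] .
  note O' = K_ents[OF hkK]
  show ?thesis
  proof (cases "m22 k \<in> pE v 1")
    case False
    have u: "eunit eps v (m22 k)" using eunit_iff O False by blast
    note I = INV[OF d h21 lt(1) lt(2) O12 O11 O22 O21 u e22 e21]
    have u': "eunit eps v (m22 (mmul eps h k))" using I(1) .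
    have nf: "m22 (mmul eps h k) \<notin> pE v 1" using eunit_not_p[OF u'] .
    have c1: "cls v (mm d) (en eps (m22 (mmul eps h k))) = cls v (mm d) (en eps (m22 k))"
      using I(2) cls_eq[OF en_OE[OF eunit_OE[OF u']] en_OE[OF O22]] by blast
    have c2: "cls v (mm' d) (snd (emul eps (m21 (mmul eps h k)) (einv eps (m22 (mmul eps h k))))) =
              cls v (mm' d) (snd (emul eps (m21 k) (einv eps (m22 k))))"
    proof -
      have "snd (emul eps (m21 (mmul eps h k)) (einv eps (m22 (mmul eps h k)))) \<in> OF v"
        using snd_ratio_OF[OF _ u'] O' by blast
      moreover have "snd (emul eps (m21 k) (einv eps (m22 k))) \<in> OF v"
        using snd_ratio_OF[OF O21 u] .
      ultimately show ?thesis using I(3) cls_eq by blast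
    qed
    show ?thesis unfolding Phi_def using False nf c1 c2 by simp
  next
    case True
    then have "m21 k \<notin> pE v 1" using K_dich[OF k] by blast
    then have u: "eunit eps v (m21 k)" using eunit_iff O by blast
    note I = INV[OF d h21 lt(1) lt(2) O11 O12 O21 O22 u e21 e22]
    have u': "eunit eps v (m21 (mmul eps h k))" using I(1) .
    have nf: "m22 (mmul eps h k) \<in> pE v 1" using I(4) True by blast
    have c1: "cls v (mm d) (en eps (m21 (mmul eps h k))) = cls v (mm d) (en eps (m21 k))"
      using I(2) cls_eq[OF en_OE[OF eunit_OE[OF u']] en_OE[OF O21]] by blast
    have c2: "cls v (mm' d) (snd (emul eps (m22 (mmul eps h k)) (einv eps (m21 (mmul eps h k))))) =
              cls v (mm' d) (snd (emul eps (m22 k) (einv eps (m21 k))))"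
    proof -
      have "snd (emul eps (m22 (mmul eps h k)) (einv eps (m21 (mmul eps h k)))) \<in> OF v"
        using snd_ratio_OF[OF _ u'] O' by blast
      moreover have "snd (emul eps (m22 k) (einv eps (m21 k))) \<in> OF v"
        using snd_ratio_OF[OF O22 u] .
      ultimately show ?thesis using I(3) cls_eq by blast
    qed
    show ?thesis unfolding Phi_def using True nf c1 c2 by simp
  qed
qed

lemma Phi_inj: assumes d: "d \<ge> 1" and k: "k1 \<in> Kgrp eps v" "k2 \<in> Kgrp eps v"
  and eq: "Phi eps v d k1 = Phi eps v d k2"
  shows "mmul eps k2 (minv k1) \<in> ZUJ eps v d"
proof -
  define g where "g = mmul eps k2 (minv k1)"
  have gK: "g \<in> Kgrp eps v" unfolding g_def using K_mult[OF k(2) K_minv[OF k(1)]] .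
  have row: "eadd (emul eps (m21 k1) (econj (m12 k1))) (emul eps (m22 k1) (econj (m11 k1))) = e1"
    using arg_cong[OF minv_G(2)[OF K_G[OF k(1)]], of m22] by simp
  have g21: "m21 g = eadd (emul eps (m21 k2) (econj (m22 k1))) (emul eps (m22 k2) (econj (m21 k1)))"
    unfolding g_def by simp
  have g22: "m22 g = eadd (emul eps (m21 k2) (econj (m12 k1))) (emul eps (m22 k2) (econj (m11 k1)))"
    unfolding g_def by simp
  note O1 = K_ents[OF k(1)] and O2 = K_ents[OF k(2)]
  have cA: "econj (m11 k1) \<in> OE v" "econj (m12 k1) \<in> OE v" using O1 by auto
  show ?thesis unfolding g_def[symmetric]
  proof (cases "m22 k1 \<in> pE v 1")
    case False
    have f2: "m22 k2 \<notin> pE v 1"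
    proof
      assume "m22 k2 \<in> pE v 1"
      then have "fst (Phi eps v d k2) = False" by (simp add: Phi_def)
      moreover have "fst (Phi eps v d k1) = True" using False by (simp add: Phi_def)
      ultimately show False using eq by simp
    qed
    have u1: "eunit eps v (m22 k1)" using eunit_iff O1 False by blast
    have u2: "eunit eps v (m22 k2)" using eunit_iff O2 f2 by blast
    have c: "cls v (mm d) (en eps (m22 k1)) = cls v (mm d) (en eps (m22 k2))"
      "cls v (mm' d) (snd (emul eps (m21 k1) (einv eps (m22 k1)))) = cls v (mm' d) (snd (emul eps (m21 k2) (einv eps (m22 k2))))"
      using eq False f2 by (simp_all add: Phi_def)
    have en: "en eps (m22 k2) - en eps (m22 k1) \<in> pF v (mm d)"
      using c(1) cls_eq[OF en_OE en_OE] O1 O2 by metis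
    have sq: "snd (emul eps (m21 k2) (einv eps (m22 k2))) - snd (emul eps (m21 k1) (einv eps (m22 k1))) \<in> pF v (mm' d)"
      using c(2) cls_eq[OF snd_ratio_OF[OF _ u2] snd_ratio_OF[OF _ u1]] O1 O2 by metis
    have rw: "eadd (emul eps (m22 k1) (econj (m11 k1))) (emul eps (m21 k1) (econj (m12 k1))) = e1"
      using row by (simp add: eadd_comm)
    note I = INJ[OF d cA(1) cA(2) _ _ u1 u2 row_ratio(1)[OF k(1)] row_ratio(1)[OF k(2)] sq en rw]
    have "m21 g \<in> pE v (mm' d)" unfolding g21 using I(1) O1 O2 by blast
    moreover obtain l t where lt: "en eps l = 1" "esub t e1 \<in> pE v (mm d)"
      "eadd (emul eps (m22 k2) (econj (m11 k1))) (emul eps (m21 k2) (econj (m12 k1))) = emul eps l t"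
      using I(2) O1 O2 by blast
    ultimately show "g \<in> ZUJ eps v d" using H_char[OF d gK _ lt(1) lt(2)] g22 lt(3) by (simp add: eadd_comm)
  next
    case True
    have f2: "m22 k2 \<in> pE v 1"
    proof (rule ccontr)
      assume "m22 k2 \<notin> pE v 1"
      then have "fst (Phi eps v d k2) = True" by (simp add: Phi_def)
      moreover have "fst (Phi eps v d k1) = False" using True by (simp add: Phi_def)
      ultimately show False using eq by simp
    qed
    have u1: "eunit eps v (m21 k1)" using eunit_iff O1 True K_dich[OF k(1)] by blast
    have u2: "eunit eps v (m21 k2)" using eunit_iff O2 f2 K_dich[OF k(2)] by blast
    have c: "cls v (mm d) (en eps (m21 k1)) = cls v (mm d) (en eps (m21 k2))"
      "cls v (mm' d) (snd (emul eps (m22 k1) (einv eps (m21 k1)))) = cls v (mm' d) (snd (emul eps (m22 k2) (einv eps (m21 k2))))"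
      using eq True f2 by (simp_all add: Phi_def)
    have en: "en eps (m21 k2) - en eps (m21 k1) \<in> pF v (mm d)"
      using c(1) cls_eq[OF en_OE en_OE] O1 O2 by metis
    have sq: "snd (emul eps (m22 k2) (einv eps (m21 k2))) - snd (emul eps (m22 k1) (einv eps (m21 k1))) \<in> pF v (mm' d)"
      using c(2) cls_eq[OF snd_ratio_OF[OF _ u2] snd_ratio_OF[OF _ u1]] O1 O2 by metis
    note I = INJ[OF d cA(2) cA(1) _ _ u1 u2 row_ratio(2)[OF k(1)] row_ratio(2)[OF k(2)] sq en row]
    have "m21 g \<in> pE v (mm' d)" unfolding g21 using I(1) O1 O2 by (simp add: eadd_comm)
    moreover obtain l t where lt: "en eps l = 1" "esub t e1 \<in> pE v (mm d)"
      "eadd (emul eps (m21 k2) (econj (m12 k1))) (emul eps (m22 k2) (econj (m11 k1))) = emul eps l t"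
      using I(2) O1 O2 by blast
    ultimately show "g \<in> ZUJ eps v d" using H_char[OF d gK _ lt(1) lt(2)] g22 lt(3) by simp
  qed
qed

lemma NSm: assumes d: "d \<ge> 1" and u: "u \<in> UF v" shows "\<exists>a. eunit eps v a \<and> en eps a - u \<in> pF v (mm d)"
proof -
  have uu: "u \<in> OF v" "u \<notin> pF v 1" using u by (auto simp: UF_def)
  obtain a where a: "a \<in> OE v" "en eps a - u \<in> pF v (int (nat (mm d)))" using NS[OF uu] by blast
  have a2: "en eps a - u \<in> pF v (mm d)" using a(2) by (simp add: mm_def)
  have "a \<notin> pE v 1"
  proof
    assume "a \<in> pE v 1"
    then have "en eps a \<in> pF v 1" using en_pE[of a 1] pF_mono[of 1 2] by simp
    moreover have "en eps a - u \<in> pF v 1" using a2 pF_mono mm_ge1[OF d] by blast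
    ultimately have "en eps a - (en eps a - u) \<in> pF v 1" using pF_diff by blast
    then show False using uu by simp
  qed
  then show ?thesis using a a2 eunit_iff by blast
qed

lemma dmat_K: assumes u: "eunit eps v a" shows "dmat eps a \<in> Kgrp eps v"
proof -
  obtain x y where a: "a = (x, y)" by (cases a)
  have N: "x * x - eps * y * y \<noteq> 0" using u a by (auto simp: eunit_def en_def)
  have e: "dmat eps a = M2 (x / (x * x - eps * y * y), y / (x * x - eps * y * y)) (0, 0) (0, 0) (x, y)"
    unfolding dmat_def a by (simp add: einv_def econj_def en_def e0_def)
  have det: "mdet eps (dmat eps a) = emul eps (econj (einv eps a)) a"
    by (rule prod_eqI') (simp_all add: dmat_def mdet_def)
  have "en eps (emul eps (econj (einv eps a)) a) = 1"
    using en_einv[OF eunit_ne[OF u]] u unfolding en_mult by (simp add: eunit_def)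
  then have "mdet eps (dmat eps a) \<noteq> e0" unfolding det using en_zero_iff[of "emul eps (econj (einv eps a)) a"] by simp
  moreover have r: "x / (x * x - eps * y * y) * x - eps * (y / (x * x - eps * y * y)) * y = 1"
  proof -
    define M where "M = x * x - eps * y * y"
    have "M \<noteq> 0" using N by (simp add: M_def)
    then have "x / M * x - eps * (y / M) * y = (x * x - eps * y * y) / M" by (simp add: field_simps)
    also have "\<dots> = 1" using \<open>M \<noteq> 0\<close> by (simp add: M_def)
    finally show ?thesis by (simp add: M_def)
  qed
  moreover have "x / (x * x - eps * y * y) * y - y / (x * x - eps * y * y) * x = 0" by simp
  ultimately have G: "dmat eps a \<in> Ggrp eps" unfolding e G_F by simp
  have "econj (einv eps a) \<in> OE v" using einv_OE[OF u] by simp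
  then show ?thesis using G eunit_OE[OF u] by (simp add: K_iff ments_def dmat_def)
qed

lemma amat_K: assumes u: "eunit eps v a" shows "amat eps a \<in> Kgrp eps v"
proof -
  obtain x y where a: "a = (x, y)" by (cases a)
  have N: "x * x - eps * y * y \<noteq> 0" using u a by (auto simp: eunit_def en_def)
  have e: "amat eps a = M2 (0, 0) (x / (x * x - eps * y * y), y / (x * x - eps * y * y)) (x, y) (0, 0)"
    unfolding amat_def a by (simp add: einv_def econj_def en_def e0_def)
  have md: "mdet eps (amat eps a) = esub e0 (emul eps (econj (einv eps a)) a)"
    by (rule prod_eqI') (simp_all add: amat_def mdet_def)
  have "en eps (esub e0 z) = en eps z" for z by (simp add: en_def)
  then have "en eps (mdet eps (amat eps a)) = en eps (emul eps (econj (einv eps a)) a)"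
    unfolding md by blast
  also have "\<dots> = 1"
    using en_einv[OF eunit_ne[OF u]] u unfolding en_mult by (simp add: eunit_def)
  finally have "mdet eps (amat eps a) \<noteq> e0" using en_zero_iff[of "mdet eps (amat eps a)"] by simp
  moreover have r: "x * (x / (x * x - eps * y * y)) - eps * y * (y / (x * x - eps * y * y)) = 1"
  proof -
    define M where "M = x * x - eps * y * y"
    have "M \<noteq> 0" using N by (simp add: M_def)
    then have "x * (x / M) - eps * y * (y / M) = (x * x - eps * y * y) / M" by (simp add: field_simps)
    also have "\<dots> = 1" using \<open>M \<noteq> 0\<close> by (simp add: M_def)
    finally show ?thesis by (simp add: M_def)
  qed
  moreover have "x * (y / (x * x - eps * y * y)) - y * (x / (x * x - eps * y * y)) = 0" by simp
  ultimately have G: "amat eps a \<in> Ggrp eps" unfolding e G_F by simp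
  have "econj (einv eps a) \<in> OE v" using einv_OE[OF u] by simp
  then show ?thesis using G eunit_OE[OF u] by (simp add: K_iff ments_def amat_def)
qed

lemma cancel_einv: "eunit eps v a \<Longrightarrow> emul eps (emul eps a c) (einv eps a) = c"
  by (metis emul_assoc emul_comm einv_mult emul_e1(2))

lemma Phi_surj: assumes d: "d \<ge> 1" and s: "s \<in> Sset v d" shows "\<exists>k\<in>Kgrp eps v. Phi eps v d k = s"
proof -
  obtain b u y where s': "s = (b, cls v (mm d) u, cls v (mm' d) y)" "u \<in> UF v"
    "(b \<and> y \<in> OF v) \<or> (\<not> b \<and> y \<in> pF v 1)"
    using s unfolding Sset_def by blast
  obtain a where a: "eunit eps v a" "en eps a - u \<in> pF v (mm d)" using NSm[OF d s'(2)] by blast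
  have ca: "cls v (mm d) (en eps a) = cls v (mm d) u"
    using cls_eq[OF en_OE[OF eunit_OE[OF a(1)]] UF_OF[OF s'(2)]] a(2) by blast
  have aO: "a \<in> OE v" using eunit_OE[OF a(1)] .
  have anp: "a \<notin> pE v 1" using eunit_not_p[OF a(1)] .
  show ?thesis
  proof (cases b)
    case True
    then have y: "y \<in> OF v" using s'(3) by blast
    define k where "k = mmul eps (dmat eps a) (lmat (0, y))"
    have lK: "lmat (0, y) \<in> Kgrp eps v" using lmat_Kn[of "(0, y)" 0] y by (simp add: OE_def[symmetric] OE_iff Kn_iff)
    have kK: "k \<in> Kgrp eps v" unfolding k_def using K_mult[OF dmat_K[OF a(1)] lK] .
    have k22: "m22 k = a" and k21: "m21 k = emul eps a (0, y)" unfolding k_def by (simp_all add: dmat_def)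
    have "snd (emul eps (m21 k) (einv eps (m22 k))) = y" unfolding k21 k22 cancel_einv[OF a(1)] by simp
    then have "Phi eps v d k = s" using True anp ca s'(1) by (simp add: Phi_def k22)
    then show ?thesis using kK by blast
  next
    case False
    then have y: "y \<in> pF v 1" using s'(3) by blast
    define k where "k = mmul eps (amat eps a) (umat y)"
    have kK: "k \<in> Kgrp eps v" unfolding k_def using K_mult[OF amat_K[OF a(1)] umat_K[OF pF1_OF[OF y]]] .
    have k21: "m21 k = a" and k22: "m22 k = emul eps a (0, y)" unfolding k_def by (simp_all add: amat_def)
    have "(0, y) \<in> pE v 1" using y by (simp add: pE_iff)
    then have k22p: "m22 k \<in> pE v 1" unfolding k22 using pE_mult0[OF aO] by blast
    have "snd (emul eps (m22 k) (einv eps (m21 k))) = y" unfolding k21 k22 cancel_einv[OF a(1)] by simp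
    then have "Phi eps v d k = s" using False k22p ca s'(1) by (simp add: Phi_def k21)
    then show ?thesis using kK by blast
  qed
qed

lemma card_Sset: assumes d: "d \<ge> 1" shows "card (Sset v d) = (q * q - 1) * q ^ (d - 1)"
proof -
  define a where "a = (d + 1) div 2 - 1"
  define b where "b = (d + 2) div 2 - 1"
  have ab: "a + b = d - 1" using d unfolding a_def b_def by presburger
  have m: "mm d = int a + 1" "mm' d = int b + 1" using d unfolding a_def b_def mm_def mm'_def by auto
  have c1: "card (cls v (mm d) ` UF v) = q ^ (a + 1) - q ^ a" unfolding m using card_cls_U .
  have c2: "card (cls v (mm' d) ` OF v) = q ^ (b + 1)" unfolding m using card_cls[of "b+1"] by (simp add: add.commute)
  have c3: "card (cls v (mm' d) ` pF v 1) = q ^ b" unfolding m using card_cls_p .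
  have f1: "finite (cls v (mm d) ` UF v)" unfolding m using fin_cls_U[of "a+1"] by (simp add: add.commute)
  have f2: "finite (cls v (mm' d) ` OF v)" unfolding m using fin_cls[of "b+1"] by (simp add: add.commute)
  have f3: "finite (cls v (mm' d) ` pF v 1)" unfolding m using fin_cls_p[of "b+1"] by (simp add: add.commute)
  have "card (Sset v d) = card ({True} \<times> cls v (mm d) ` UF v \<times> cls v (mm' d) ` OF v) +
      card ({False} \<times> cls v (mm d) ` UF v \<times> cls v (mm' d) ` pF v 1)"
    unfolding Sset_def using f1 f2 f3 by (intro card_Un_disjoint) auto
  also have "\<dots> = (q ^ (a + 1) - q ^ a) * q ^ (b + 1) + (q ^ (a + 1) - q ^ a) * q ^ b"
    by (simp add: card_cartesian_product c1 c2 c3)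
  also have "\<dots> = (q * q - 1) * q ^ (a + b)"
  proof -
    obtain r where r: "q = Suc r" using q_pos by (cases q) auto
    have e1: "Suc r ^ (a + 1) - Suc r ^ a = Suc r ^ a * r" by simp
    have e2: "Suc r * Suc r - 1 = r * r + 2 * r" by simp
    show ?thesis unfolding r e1 e2 by (simp add: algebra_simps power_add)
  qed
  finally show ?thesis using ab by simp
qed

end

lemma sum_fun_app: "(\<Sum>i\<in>A. F i) x = (\<Sum>i\<in>A. F i x)"
  by (induction A rule: infinite_finite_induct) auto

lemma vs_cscale: "vector_space (cscale :: complex \<Rightarrow> (nat \<Rightarrow> 'b \<Rightarrow> complex) \<Rightarrow> _)"
  by unfold_locales (auto simp: cscale_def fun_eq_iff algebra_simps)

definition krep :: "'f::field \<Rightarrow> ('f \<Rightarrow> int) \<Rightarrow> nat \<Rightarrow> bool \<times> 'f set \<times> 'f set \<Rightarrow> ('f \<times> 'f) m2" where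
  "krep eps v d s = (SOME k. k \<in> Kgrp eps v \<and> Phi eps v d k = s)"

context LP begin

abbreviation chi where "chi d \<equiv> PsiTheta eps v varpi psi' theta d"

definition bfun :: "nat \<Rightarrow> bool \<times> 'f set \<times> 'f set \<Rightarrow> ('f \<times> 'f) m2 \<Rightarrow> complex" where
  "bfun d s k = (if k \<in> Kgrp eps v \<and> Phi eps v d k = s then chi d (mmul eps k (minv (krep eps v d s))) else 0)"

lemma krep: assumes "d \<ge> 1" "s \<in> Sset v d"
  shows "krep eps v d s \<in> Kgrp eps v" "Phi eps v d (krep eps v d s) = s"
proof -
  have "\<exists>k. k \<in> Kgrp eps v \<and> Phi eps v d k = s" using Phi_surj[OF assms] by blast
  then have "krep eps v d s \<in> Kgrp eps v \<and> Phi eps v d (krep eps v d s) = s"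
    unfolding krep_def by (rule someI_ex)
  then show "krep eps v d s \<in> Kgrp eps v" "Phi eps v d (krep eps v d s) = s" by auto
qed

lemma chi_mI: "d \<ge> 1 \<Longrightarrow> chi d mI = 1"
proof -
  assume d: "d \<ge> 1"
  have "esub e1 e1 = (e0 :: 'f \<times> 'f)" by (rule prod_eqI') simp_all
  then have j: "mI \<in> Jgrp eps v d" using mI_G by (simp add: J_iff)
  have "psi' 0 = 1" using psi_triv by simp
  then show ?thesis using J_H(2)[OF d j] by (simp add: PsiJ_eq)
qed

lemma bfun_Sd: assumes d: "d \<ge> 1" and s: "s \<in> Sset v d" shows "bfun d s \<in> Sd eps v varpi psi' theta d"
proof -
  note ks = krep[OF d s]
  have "bfun d s (mmul eps h k) = chi d h * bfun d s k"
    if h: "h \<in> ZUJ eps v d" and k: "k \<in> Kgrp eps v" for h k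
  proof -
    have hk: "mmul eps h k \<in> Kgrp eps v" using K_mult[OF H_K[OF h] k] .
    have ph: "Phi eps v d (mmul eps h k) = Phi eps v d k" using Phi_inv[OF d h k] .
    show ?thesis
    proof (cases "Phi eps v d k = s")
      case True
      have kk: "mmul eps k (minv (krep eps v d s)) \<in> ZUJ eps v d"
        using Phi_inj[OF d ks(1) k] True ks(2) by simp
      have "chi d (mmul eps (mmul eps h k) (minv (krep eps v d s))) =
            chi d (mmul eps h (mmul eps k (minv (krep eps v d s))))" by (simp add: mmul_assoc)
      also have "\<dots> = chi d h * chi d (mmul eps k (minv (krep eps v d s)))" using H_mult(2)[OF d h kk] .
      finally show ?thesis using True hk k ph by (simp add: bfun_def)
    next
      case False then show ?thesis using hk k ph by (simp add: bfun_def)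
    qed
  qed
  then show ?thesis unfolding Sd_def IndSpace_def by (auto simp: bfun_def)
qed

lemma bfun_self: assumes d: "d \<ge> 1" and s: "s \<in> Sset v d" shows "bfun d s (krep eps v d s) = 1"
  using krep[OF d s] minv_G(2)[OF K_G[OF krep(1)[OF d s]]] chi_mI[OF d] by (simp add: bfun_def)

lemma bfun_other: assumes d: "d \<ge> 1" and s': "s' \<in> Sset v d" and ne: "s \<noteq> s'"
  shows "bfun d s (krep eps v d s') = 0"
  using krep[OF d s'] ne by (simp add: bfun_def)

lemma fin_Sset: "finite (Sset v d)"
proof -
  have f1: "finite (cls v (mm d) ` UF v)" unfolding mm_def by (rule fin_cls_U)
  have f2: "finite (cls v (mm' d) ` OF v)" unfolding mm'_def by (rule fin_cls)
  have f3: "finite (cls v (mm' d) ` pF v 1)" unfolding mm'_def by (rule fin_cls_p)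
  show ?thesis unfolding Sset_def using f1 f2 f3 by (intro finite_UnI finite_cartesian_product) auto
qed

lemma Sd_expand: assumes d: "d \<ge> 1" and f: "f \<in> Sd eps v varpi psi' theta d"
  shows "f k = (\<Sum>s\<in>Sset v d. f (krep eps v d s) * bfun d s k)"
proof (cases "k \<in> Kgrp eps v")
  case False
  then show ?thesis using Sd_zero[OF f] by (simp add: bfun_def)
next
  case k: True
  define s0 where "s0 = Phi eps v d k"
  have s0: "s0 \<in> Sset v d" using Phi_S[OF k] by (simp add: s0_def)
  note ks = krep[OF d s0]
  have "(\<Sum>s\<in>Sset v d. f (krep eps v d s) * bfun d s k) =
     (\<Sum>s\<in>Sset v d. if s = s0 then f (krep eps v d s) * chi d (mmul eps k (minv (krep eps v d s))) else 0)"
    by (rule sum.cong) (auto simp: bfun_def s0_def k)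
  also have "\<dots> = f (krep eps v d s0) * chi d (mmul eps k (minv (krep eps v d s0)))"
    using sum.delta[OF fin_Sset[of d], of s0 "\<lambda>s. f (krep eps v d s) * chi d (mmul eps k (minv (krep eps v d s)))"] s0 by simp
  finally have e: "(\<Sum>s\<in>Sset v d. f (krep eps v d s) * bfun d s k) = f (krep eps v d s0) * chi d (mmul eps k (minv (krep eps v d s0)))" .
  have h: "mmul eps k (minv (krep eps v d s0)) \<in> ZUJ eps v d"
    using Phi_inj[OF d ks(1) k] ks(2) by (simp add: s0_def)
  have "mmul eps (mmul eps k (minv (krep eps v d s0))) (krep eps v d s0) = k"
    by (simp add: mmul_assoc minv_G(1)[OF K_G[OF ks(1)]])
  then have "f k = chi d (mmul eps k (minv (krep eps v d s0))) * f (krep eps v d s0)"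
    using Sd_eq[OF f h ks(1)] by simp
  then show ?thesis using e by (simp add: mult.commute)
qed

end

context LP begin

definition ebas :: "nat \<Rightarrow> bool \<times> 'f set \<times> 'f set \<Rightarrow> nat \<Rightarrow> ('f \<times> 'f) m2 \<Rightarrow> complex" where
  "ebas d s = (\<lambda>d'. if d' = d then bfun d s else (\<lambda>_. 0))"

lemma zero_Sd: "(\<lambda>_. 0) \<in> Sd eps v varpi psi' theta d"
  by (simp add: Sd_def IndSpace_def)

lemma dim_fixed: assumes Pge: "\<And>d. P d \<Longrightarrow> d \<ge> 1"
  shows "cdim (fixedVecs eps v (2*r+1) (tauSpace eps v varpi psi' theta P)) =
    (\<Sum>d\<in>{d. P d \<and> d \<le> 2*r}. (q * q - 1) * q ^ (d - 1))"
proof -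
  interpret vs: vector_space "cscale :: complex \<Rightarrow> (nat \<Rightarrow> ('f \<times> 'f) m2 \<Rightarrow> complex) \<Rightarrow> _"
    by (rule vs_cscale)
  define W where "W = fixedVecs eps v (2*r+1) (tauSpace eps v varpi psi' theta P)"
  define D where "D = {d. P d \<and> d \<le> 2*r}"
  define I where "I = Sigma D (Sset v)"
  define e where "e = (\<lambda>(d, s). ebas d s)"
  define B where "B = e ` I"
  have finD: "finite D" unfolding D_def by (rule finite_subset[of _ "{..2*r}"]) auto
  have finI: "finite I" unfolding I_def using finD fin_Sset by blast
  have finB: "finite B" unfolding B_def using finI by simp
  have Dge: "d \<in> D \<Longrightarrow> d \<ge> 1" for d using Pge by (simp add: D_def)
  have eval: "e (d, s) d0 (krep eps v d0 s0) = (if (d, s) = (d0, s0) then 1 else 0)"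
    if "(d, s) \<in> I" "(d0, s0) \<in> I" for d s d0 s0
  proof -
    have d0: "d0 \<ge> 1" "s0 \<in> Sset v d0" using that Dge by (auto simp: I_def)
    have "s \<in> Sset v d" using that by (auto simp: I_def)
    then show ?thesis using bfun_self[OF d0] bfun_other[OF d0(1), of s0 s] d0
      by (auto simp: e_def ebas_def)
  qed
  have BW: "B \<subseteq> W"
  proof
    fix w assume "w \<in> B"
    then obtain d s where ds: "(d, s) \<in> I" "w = ebas d s" by (auto simp: B_def e_def)
    have d: "d \<ge> 1" "P d" "d \<le> 2*r" "s \<in> Sset v d" using ds Dge by (auto simp: I_def D_def)
    have "{d'. w d' \<noteq> (\<lambda>_. 0)} \<subseteq> {d}" using ds by (auto simp: ebas_def)
    then have fin: "finite {d'. w d' \<noteq> (\<lambda>_. 0)}" by (rule finite_subset) simp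
    have t: "w \<in> tauSpace eps v varpi psi' theta P"
      unfolding tauSpace_def using fin ds d bfun_Sd[OF d(1) d(4)] zero_Sd by (auto simp: ebas_def)
    have "w d' (mmul eps k g) = w d' k" if "k \<in> Kgrp eps v" "g \<in> Kn eps v (2*r+1)" for d' k g
      using Sd_fixed[OF d(1) _ bfun_Sd[OF d(1) d(4)] that] d(3) ds(2) by (auto simp: ebas_def)
    then show "w \<in> W" using t by (simp add: W_def fixedVecs_def)
  qed
  have WB: "W \<subseteq> vs.span B"
  proof
    fix f assume fW: "f \<in> W"
    have ft: "f \<in> tauSpace eps v varpi psi' theta P" and ffix: "\<forall>d. \<forall>k\<in>Kgrp eps v. \<forall>g\<in>Kn eps v (2*r+1). f d (mmul eps k g) = f d k"
      using fW by (auto simp: W_def fixedVecs_def)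
    define c where "c = (\<lambda>(d, s). f d (krep eps v d s))"
    have eq: "f = (\<Sum>i\<in>I. cscale (c i) (e i))"
    proof (intro ext)
      fix d' k
      have "(\<Sum>i\<in>I. cscale (c i) (e i)) d' k = (\<Sum>i\<in>I. c i * e i d' k)"
        by (simp add: sum_fun_app cscale_def)
      also have "\<dots> = (\<Sum>(d, s)\<in>I. c (d, s) * e (d, s) d' k)"
        by (rule sum.cong) auto
      also have "\<dots> = (\<Sum>d\<in>D. \<Sum>s\<in>Sset v d. c (d, s) * e (d, s) d' k)"
        unfolding I_def using sum.Sigma[OF finD, of "Sset v" "\<lambda>d s. c (d, s) * e (d, s) d' k"] fin_Sset by simp
      also have "\<dots> = (\<Sum>d\<in>D. if d = d' then (\<Sum>s\<in>Sset v d'. f d' (krep eps v d' s) * bfun d' s k) else 0)"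
        by (rule sum.cong) (auto simp: c_def e_def ebas_def)
      also have "\<dots> = (if d' \<in> D then (\<Sum>s\<in>Sset v d'. f d' (krep eps v d' s) * bfun d' s k) else 0)"
        using sum.delta[OF finD, of d' "\<lambda>_. \<Sum>s\<in>Sset v d'. f d' (krep eps v d' s) * bfun d' s k"]
        by (simp add: eq_commute[of _ d'])
      also have "\<dots> = f d' k"
      proof (cases "d' \<in> D")
        case True
        then have "f d' \<in> Sd eps v varpi psi' theta d'" using ft by (simp add: tauSpace_def D_def)
        then show ?thesis using True Sd_expand[OF Dge[OF True]] by simp
      next
        case False
        show ?thesis
        proof (cases "P d'")
          case Pd: True
          then have "d' > 2*r" using False by (simp add: D_def)
          have "f d' \<in> Sd eps v varpi psi' theta d'" using ft Pd by (simp add: tauSpace_def)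
          moreover have fxd: "\<forall>k\<in>Kgrp eps v. \<forall>g\<in>Kn eps v (2*r+1). f d' (mmul eps k g) = f d' k"
            using ffix by blast
          moreover have "2*r+1 \<le> d'" using \<open>d' > 2*r\<close> by simp
          ultimately have "f d' k = 0" using Sd_vanish[OF Pge[OF Pd]] by blast
          then show ?thesis using False by simp
        next
          case Pd: False
          then have "f d' = (\<lambda>_. 0)" using ft by (simp add: tauSpace_def)
          then show ?thesis using False by simp
        qed
      qed
      finally show "f d' k = (\<Sum>i\<in>I. cscale (c i) (e i)) d' k" by simp
    qed
    have "(\<Sum>i\<in>I. cscale (c i) (e i)) \<in> vs.span B"
      by (rule vs.span_sum, rule vs.span_scale, rule vs.span_base) (auto simp: B_def)
    then show "f \<in> vs.span B" using eq by simp
  qed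
  have injE: "inj_on e I"
  proof (rule inj_onI)
    fix i j assume ij: "i \<in> I" "j \<in> I" "e i = e j"
    obtain d s where i: "i = (d, s)" by (cases i)
    obtain d' s' where j: "j = (d', s')" by (cases j)
    have "e i d (krep eps v d s) = 1" using eval[of d s d s] ij(1) i by simp
    moreover have "e j d (krep eps v d s) = (if (d', s') = (d, s) then 1 else 0)"
      using eval[of d' s' d s] ij i j by simp
    moreover have "e i d (krep eps v d s) = e j d (krep eps v d s)" using ij(3) by simp
    ultimately have X: "(if (d', s') = (d, s) then (1::complex) else 0) = 1" by simp
    have "(d', s') = (d, s)"
    proof (rule ccontr)
      assume "(d', s') \<noteq> (d, s)"
      then have "(if (d', s') = (d, s) then (1::complex) else 0) = 0" by (simp only: if_False)
      then show False using X by simp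
    qed
    then show "i = j" using i j by simp
  qed
  have indep: "vs.independent B"
  proof
    assume "vs.dependent B"
    then obtain u where u: "\<exists>w\<in>B. u w \<noteq> 0" "(\<Sum>w\<in>B. cscale (u w) w) = 0"
      using vs.dependent_finite[OF finB] by blast
    then obtain w0 where w0: "w0 \<in> B" "u w0 \<noteq> 0" by blast
    then obtain d0 s0 where i0: "(d0, s0) \<in> I" "w0 = e (d0, s0)" by (auto simp: B_def)
    have "(\<Sum>w\<in>B. cscale (u w) w) d0 (krep eps v d0 s0) = (\<Sum>w\<in>B. u w * w d0 (krep eps v d0 s0))"
      by (simp add: sum_fun_app cscale_def)
    also have "\<dots> = (\<Sum>w\<in>B. if w = w0 then u w else 0)"
    proof (rule sum.cong)
      fix w assume "w \<in> B"
      then obtain d s where ds: "(d, s) \<in> I" "w = e (d, s)" by (auto simp: B_def)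
      have "w = w0 \<longleftrightarrow> (d, s) = (d0, s0)" using injE ds i0 by (auto dest: inj_onD)
      then show "u w * w d0 (krep eps v d0 s0) = (if w = w0 then u w else 0)"
        using eval[OF ds(1) i0(1)] ds by simp
    qed simp
    also have "\<dots> = u w0" using sum.delta[OF finB, of w0 u] w0(1) by simp
    finally have "u w0 = 0" using u(2) by simp
    then show False using w0 by simp
  qed
  have "card B = card I" unfolding B_def using card_image[OF injE] .
  also have "\<dots> = (\<Sum>d\<in>D. card (Sset v d))" unfolding I_def using card_SigmaI[OF finD] fin_Sset by blast
  also have "\<dots> = (\<Sum>d\<in>D. (q * q - 1) * q ^ (d - 1))" using card_Sset Dge by simp
  finally have cB: "card B = (\<Sum>d\<in>D. (q * q - 1) * q ^ (d - 1))" .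
  have "vs.dim W = (\<Sum>d\<in>D. (q * q - 1) * q ^ (d - 1))"
    by (rule vs.dim_unique[OF BW WB indep cB])
  then show ?thesis by (simp add: cdim_def W_def D_def)
qed

end

lemma sum_even_aux: fixes q :: nat assumes "q \<ge> 1"
  shows "(\<Sum>d\<in>{d. (even d \<and> d > 0) \<and> d \<le> 2*r}. (q * q - 1) * q ^ (d - 1)) + q = q ^ (2*r+1)"
proof (induction r)
  case 0
  have "{d::nat. (even d \<and> d > 0) \<and> d \<le> 0} = {}" by auto
  then show ?case by simp
next
  case (Suc r)
  have set: "{d. (even d \<and> d > 0) \<and> d \<le> 2 * Suc r} = insert (2*r+2) {d. (even d \<and> d > 0) \<and> d \<le> 2*r}"
    by auto
  have fin: "finite {d::nat. (even d \<and> d > 0) \<and> d \<le> 2*r}" by (rule finite_subset[of _ "{..2*r}"]) auto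
  have nin: "2*r+2 \<notin> {d::nat. (even d \<and> d > 0) \<and> d \<le> 2*r}" by simp
  have qq: "(q * q - 1) + 1 = q * q" using assms by (simp add: Suc_le_eq)
  have "(\<Sum>d\<in>{d. (even d \<and> d > 0) \<and> d \<le> 2 * Suc r}. (q * q - 1) * q ^ (d - 1)) + q =
     (q * q - 1) * q ^ (2*r+1) + ((\<Sum>d\<in>{d. (even d \<and> d > 0) \<and> d \<le> 2*r}. (q * q - 1) * q ^ (d - 1)) + q)"
    unfolding set using fin nin by simp
  also have "\<dots> = (q * q - 1) * q ^ (2*r+1) + q ^ (2*r+1)" using Suc by simp
  also have "\<dots> = ((q * q - 1) + 1) * q ^ (2*r+1)" by (simp add: algebra_simps)
  also have "\<dots> = q ^ (2 * Suc r + 1)" unfolding qq by (simp add: power_add power2_eq_square algebra_simps)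
  finally show ?case .
qed

lemma sum_odd_aux: fixes q :: nat assumes "q \<ge> 1"
  shows "(\<Sum>d\<in>{d. odd d \<and> d \<le> 2*r}. (q * q - 1) * q ^ (d - 1)) + 1 = q ^ (2*r)"
proof (induction r)
  case 0
  have "{d::nat. odd d \<and> d \<le> 0} = {}" by (auto dest: odd_pos)
  then show ?case by simp
next
  case (Suc r)
  have set: "{d. odd d \<and> d \<le> 2 * Suc r} = insert (2*r+1) {d. odd d \<and> d \<le> 2*r}"
    by (auto; presburger)
  have fin: "finite {d::nat. odd d \<and> d \<le> 2*r}" by (rule finite_subset[of _ "{..2*r}"]) auto
  have nin: "2*r+1 \<notin> {d::nat. odd d \<and> d \<le> 2*r}" by simp
  have qq: "(q * q - 1) + 1 = q * q" using assms by (simp add: Suc_le_eq)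
  have "(\<Sum>d\<in>{d. odd d \<and> d \<le> 2 * Suc r}. (q * q - 1) * q ^ (d - 1)) + 1 =
     (q * q - 1) * q ^ (2*r) + ((\<Sum>d\<in>{d. odd d \<and> d \<le> 2*r}. (q * q - 1) * q ^ (d - 1)) + 1)"
    unfolding set using fin nin by simp
  also have "\<dots> = (q * q - 1) * q ^ (2*r) + q ^ (2*r)" using Suc by simp
  also have "\<dots> = ((q * q - 1) + 1) * q ^ (2*r)" by (simp add: algebra_simps)
  also have "\<dots> = q ^ (2 * Suc r)" unfolding qq by (simp add: power_add power2_eq_square algebra_simps)
  finally show ?case .
qed

theorem lemma7p3:
  fixes v :: "'f::field \<Rightarrow> int" and eps varpi :: 'f
    and psi' :: "'f \<Rightarrow> complex" and theta :: "('f \<times> 'f) m2 \<Rightarrow> complex" and r :: nat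
  assumes F: "nonarch_local_field v" and oddchar: "odd_residual_char v"
    and unif: "varpi \<noteq> 0" "v varpi = 1"
    and eps: "eps \<noteq> 0" "v eps = 0" "\<not> (\<exists>x. x * x = eps)"
    and psi_add: "\<forall>x y. psi' (x + y) = psi' x * psi' y"
    and psi_triv: "\<forall>x\<in>pF v 1. psi' x = 1"
    and psi_nontriv: "\<exists>x\<in>OF v. psi' x \<noteq> 1"
    and theta_mult: "\<forall>z\<in>Zgrp eps. \<forall>z'\<in>Zgrp eps. theta (mmul eps z z') = theta z * theta z'"
    and theta_triv: "\<forall>z\<in>Zgrp eps \<inter> Kn eps v 1. theta z = 1"
  shows "cdim (fixedVecs eps v (2*r+1)
             (tauSpace eps v varpi psi' theta (\<lambda>d. even d \<and> d > 0)))
           = residue_card v * (residue_card v ^ (2*r) - 1)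
       \<and> cdim (fixedVecs eps v (2*r+1)
             (tauSpace eps v varpi psi' theta (\<lambda>d. odd d)))
           = residue_card v ^ (2*r) - 1"
proof -
  interpret LP v eps varpi psi' theta
    using assms by unfold_locales auto
  have qdef: "q = residue_card v" by (simp add: q_def)
  have e: "cdim (fixedVecs eps v (2*r+1) (tauSpace eps v varpi psi' theta (\<lambda>d. even d \<and> d > 0))) =
      (\<Sum>d\<in>{d. (even d \<and> d > 0) \<and> d \<le> 2*r}. (q * q - 1) * q ^ (d - 1))"
    by (rule dim_fixed) simp
  have o: "cdim (fixedVecs eps v (2*r+1) (tauSpace eps v varpi psi' theta (\<lambda>d. odd d))) =
      (\<Sum>d\<in>{d. odd d \<and> d \<le> 2*r}. (q * q - 1) * q ^ (d - 1))"
    by (rule dim_fixed) (simp add: odd_pos Suc_le_eq)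
  have "(\<Sum>d\<in>{d. (even d \<and> d > 0) \<and> d \<le> 2*r}. (q * q - 1) * q ^ (d - 1)) = q ^ (2*r+1) - q"
    using sum_even_aux[OF q_pos, of r] by simp
  also have "\<dots> = q * (q ^ (2*r) - 1)" by (simp add: algebra_simps diff_mult_distrib2)
  finally have se: "(\<Sum>d\<in>{d. (even d \<and> d > 0) \<and> d \<le> 2*r}. (q * q - 1) * q ^ (d - 1)) = q * (q ^ (2*r) - 1)" .
  have so: "(\<Sum>d\<in>{d. odd d \<and> d \<le> 2*r}. (q * q - 1) * q ^ (d - 1)) = q ^ (2*r) - 1"
    using sum_odd_aux[OF q_pos, of r] by simp
  show ?thesis using e o se so qdef by simp
qed

end
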